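(* Assume $(K-1)P^2<1$. Then: (i) the functions $h_N(z)=\psi^{s*}_N(z,z_0)+\frac{1}{2\pi}\log|z-z_0|$ are harmonic on $D\cap\mathbb{C}$ and converge uniformly on every compact subset of $D\cap\mathbb{C}$. Consequently $\psi^s(z,z_0):=\lim_{N\to\infty}\psi^{s*}_N(z,z_0)$ exists for every finite $z\in D\setminus\{z_0\}$, is harmonic in $z$ on $(D\cap\mathbb{C})\setminus\{z_0\}$, and $\psi^s(z,z_0)+\frac{1}{2\pi}\log|z-z_0|$ extends to a harmonic function in a neighborhood of $z_0$; (ii) for each $j=1,\ldots,K$, the restrictions of $\psi^{s*}_N(\cdot,z_0)$ to the circle $L_j$ converge, uniformly in $z\in L_j$, to a finite constant $C_j$ (independent of $z\in L_j$).
   Context: Let $K\ge 2$. Let $L_j=\{z:|z-c_j|=R_j\}$, $j=1,\dots,K$, be circles in $\mathbb{C}$ whose closed disks $\{|z-c_j|\le R_j\}$ are pairwise disjoint, and let $D$ be the domain in the extended complex plane exterior to all of these closed disks (so $D$ contains $\infty$). Write $\operatorname{int}L_j$ for the open disk $|z-c_j|<R_j$. Let $T_j(z)=c_j+\frac{R_j^2}{\bar z-\bar c_j}$ be the inversion in $L_j$ (with $T_j(c_j)=\infty$, $T_j(\infty)=c_j$). Fix a finite point $z_0\in D$. For $M\ge 0$, the level-$M$ points are the multiset of points $T_{i_1}\circ T_{i_2}\circ\cdots\circ T_{i_M}(z_0)$ over all index words $(i_1,\ldots,i_M)\in\{1,\ldots,K\}^M$ with $i_k\ne i_{k+1}$ for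 $k=1,\ldots,M-1$ (level 0 is the single point $z_0$); there are $K(K-1)^{M-1}$ level-$M$ points for $M\ge1$, each lying in $\operatorname{int}L_{i_1}$. Define $\psi^s_N(z,z_0)=-\frac{1}{2\pi}\sum_{M=0}^{N}(-1)^M\sum_{\zeta\in\text{level }M}\log|z-\zeta|$ (sum with multiplicity), and $\psi^{s*}_N(z,z_0)=\frac{(K-1)\psi^s_N(z,z_0)+\psi^s_{N+1}(z,z_0)}{K}$. Define $P_j=\max\left\{\frac{R_j}{|z_0-c_j|},\ \frac{R_j}{|c_j-c_l|-R_l}\ (l=1,\ldots,K,\ l\ne j)\right\}$ and $P=\max\{P_1,\ldots,P_K\}$. *)

theory Defs
  imports "HOL-Analysis.Analysis"
begin

text \<open>Directional (partial) derivative of a real-valued function on the complex plane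
  in direction v (v = 1: d/dx, v = i: d/dy).\<close>
definition pdiff :: "complex \<Rightarrow> (complex \<Rightarrow> real) \<Rightarrow> complex \<Rightarrow> real" where
  "pdiff v f z = deriv (\<lambda>t::real. f (z + of_real t * v)) 0"

definition pdiff_exists_on :: "complex set \<Rightarrow> complex \<Rightarrow> (complex \<Rightarrow> real) \<Rightarrow> bool" where
  "pdiff_exists_on S v f \<longleftrightarrow> (\<forall>z\<in>S. (\<lambda>t::real. f (z + of_real t * v)) differentiable (at 0))"

definition C2_on :: "complex set \<Rightarrow> (complex \<Rightarrow> real) \<Rightarrow> bool" where
  "C2_on S f \<longleftrightarrow> continuous_on S f \<and>
     (\<forall>v\<in>{1, \<i>}. pdiff_exists_on S v f \<and> continuous_on S (pdiff v f) \<and>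
        (\<forall>u\<in>{1, \<i>}. pdiff_exists_on S u (pdiff v f) \<and> continuous_on S (pdiff u (pdiff v f))))"

definition harmonic_on :: "complex set \<Rightarrow> (complex \<Rightarrow> real) \<Rightarrow> bool" where
  "harmonic_on S f \<longleftrightarrow> open S \<and> C2_on S f \<and>
     (\<forall>z\<in>S. pdiff 1 (pdiff 1 f) z + pdiff \<i> (pdiff \<i> f) z = 0)"

text \<open>Finite part D \<inter> C of the exterior domain of the circles L_j, j = 1..K.\<close>
definition Dfin :: "nat \<Rightarrow> (nat \<Rightarrow> complex) \<Rightarrow> (nat \<Rightarrow> real) \<Rightarrow> complex set" where
  "Dfin K c R = {z. \<forall>j\<in>{1..K}. cmod (z - c j) > R j}"

definition inv_circ :: "(nat \<Rightarrow> complex) \<Rightarrow> (nat \<Rightarrow> real) \<Rightarrow> nat \<Rightarrow> complex \<Rightarrow> complex" where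
  "inv_circ c R j z = c j + complex_of_real ((R j)\<^sup>2) / cnj (z - c j)"

definition words :: "nat \<Rightarrow> nat \<Rightarrow> nat list set" where
  "words K M = {w. length w = M \<and> set w \<subseteq> {1..K} \<and> (\<forall>k. Suc k < M \<longrightarrow> w ! k \<noteq> w ! Suc k)}"

definition word_pt :: "(nat \<Rightarrow> complex) \<Rightarrow> (nat \<Rightarrow> real) \<Rightarrow> complex \<Rightarrow> nat list \<Rightarrow> complex" where
  "word_pt c R z0 w = foldr (inv_circ c R) w z0"

definition psi_s :: "nat \<Rightarrow> (nat \<Rightarrow> complex) \<Rightarrow> (nat \<Rightarrow> real) \<Rightarrow> complex \<Rightarrow> nat \<Rightarrow> complex \<Rightarrow> real" where
  "psi_s K c R z0 N z = - (1 / (2 * pi)) *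
     (\<Sum>M\<le>N. (-1) ^ M * (\<Sum>w\<in>words K M. ln (cmod (z - word_pt c R z0 w))))"

definition psi_s_star :: "nat \<Rightarrow> (nat \<Rightarrow> complex) \<Rightarrow> (nat \<Rightarrow> real) \<Rightarrow> complex \<Rightarrow> nat \<Rightarrow> complex \<Rightarrow> real" where
  "psi_s_star K c R z0 N z =
     ((real K - 1) * psi_s K c R z0 N z + psi_s K c R z0 (Suc N) z) / real K"

definition Pj :: "nat \<Rightarrow> (nat \<Rightarrow> complex) \<Rightarrow> (nat \<Rightarrow> real) \<Rightarrow> complex \<Rightarrow> nat \<Rightarrow> real" where
  "Pj K c R z0 j = Max ({R j / cmod (z0 - c j)} \<union>
       {R j / (cmod (c j - c l) - R l) | l. l \<in> {1..K} \<and> l \<noteq> j})"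

definition Pmax :: "nat \<Rightarrow> (nat \<Rightarrow> complex) \<Rightarrow> (nat \<Rightarrow> real) \<Rightarrow> complex \<Rightarrow> real" where
  "Pmax K c R z0 = Max (Pj K c R z0 ` {1..K})"

end

theory Submission
  imports Defs "HOL-Complex_Analysis.Complex_Analysis"
begin


lemma Re_holo_line_deriv:
  fixes g :: "complex \<Rightarrow> complex" and f :: "complex \<Rightarrow> real"
  assumes holo: "g holomorphic_on ball a r" and y: "y \<in> ball a r"
    and eq: "\<forall>x\<in>ball a r. f x = Re (g x)"
  shows "((\<lambda>t::real. f (y + of_real t * v)) has_real_derivative Re (deriv g y * v)) (at 0)"
proof -
  have gd: "(g has_field_derivative deriv g y) (at y)"
    using holomorphic_derivI[OF holo open_ball y] by simp
  have lin: "((\<lambda>t::real. y + of_real t * v) has_vector_derivative v) (at 0)"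
    by (auto intro!: derivative_eq_intros)
  have "((\<lambda>t::real. g (y + of_real t * v)) has_vector_derivative deriv g y * v) (at 0)"
  proof -
    have "((g \<circ> (\<lambda>t::real. y + of_real t * v)) has_vector_derivative deriv g y * v) (at 0)"
      using field_vector_diff_chain_at[OF lin, of g "deriv g y"] gd by (simp add: mult.commute)
    then show ?thesis by (simp add: o_def)
  qed
  then have d1: "((\<lambda>t::real. Re (g (y + of_real t * v))) has_real_derivative Re (deriv g y * v)) (at 0)"
    by (rule has_field_derivative_Re)
  have ev: "eventually (\<lambda>t::real. f (y + of_real t * v) = Re (g (y + of_real t * v))) (nhds 0)"
  proof -
    have "open ((\<lambda>t::real. y + of_real t * v) -` ball a r)"
      by (intro continuous_open_vimage) (auto intro!: continuous_intros)
    then have "eventually (\<lambda>t::real. t \<in> (\<lambda>t::real. y + of_real t * v) -` ball a r) (nhds 0)"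
      using y by (intro eventually_nhds_in_open) auto
    then have "eventually (\<lambda>t::real. y + of_real t * v \<in> ball a r) (nhds 0)" by simp
    then show ?thesis using eq by (auto elim!: eventually_mono)
  qed
  show ?thesis
    by (rule DERIV_cong_ev[THEN iffD2, OF refl ev refl d1])
qed

lemma pdiff_Re_holo:
  assumes holo: "g holomorphic_on ball a r" and y: "y \<in> ball a r"
    and eq: "\<forall>x\<in>ball a r. f x = Re (g x)"
  shows "pdiff v f y = Re (deriv g y * v)"
    and "(\<lambda>t::real. f (y + of_real t * v)) differentiable (at 0)"
  using Re_holo_line_deriv[OF assms, of v]
  by (auto simp: pdiff_def DERIV_imp_deriv real_differentiable_def)

definition locRe :: "complex set \<Rightarrow> (complex \<Rightarrow> real) \<Rightarrow> bool" where
  "locRe S f \<longleftrightarrow> (\<forall>a\<in>S. \<exists>r>0. \<exists>g. g holomorphic_on ball a r \<and> (\<forall>x\<in>ball a r. f x = Re (g x)))"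

lemma locRe_pdiff:
  assumes "locRe S f"
  shows "locRe S (pdiff v f)" "pdiff_exists_on S v f"
proof -
  show "locRe S (pdiff v f)" unfolding locRe_def
  proof
    fix a assume "a \<in> S"
    then obtain r g where r: "r > 0" "g holomorphic_on ball a r" "\<forall>x\<in>ball a r. f x = Re (g x)"
      using assms unfolding locRe_def by blast
    have "(\<lambda>x. deriv g x * v) holomorphic_on ball a r"
      using r by (intro holomorphic_intros) auto
    moreover have "\<forall>x\<in>ball a r. pdiff v f x = Re (deriv g x * v)"
      using pdiff_Re_holo(1)[OF r(2) _ r(3)] by blast
    ultimately show "\<exists>r>0. \<exists>g. g holomorphic_on ball a r \<and> (\<forall>x\<in>ball a r. pdiff v f x = Re (g x))"
      using r(1) by blast
  qed
  show "pdiff_exists_on S v f" unfolding pdiff_exists_on_def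
  proof
    fix a assume "a \<in> S"
    then obtain r g where r: "r > 0" "g holomorphic_on ball a r" "\<forall>x\<in>ball a r. f x = Re (g x)"
      using assms unfolding locRe_def by blast
    show "(\<lambda>t::real. f (a + of_real t * v)) differentiable (at 0)"
      using pdiff_Re_holo(2)[OF r(2) _ r(3)] r(1) by simp
  qed
qed

lemma locRe_cont:
  assumes "locRe S f" "open S"
  shows "continuous_on S f"
  unfolding continuous_on_eq_continuous_at[OF assms(2)]
proof
  fix a assume "a \<in> S"
  then obtain r g where r: "r > 0" "g holomorphic_on ball a r" "\<forall>x\<in>ball a r. f x = Re (g x)"
    using assms unfolding locRe_def by blast
  have ev: "eventually (\<lambda>x. f x = Re (g x)) (nhds a)"
    using r by (intro eventually_nhds_in_open[of "ball a r", THEN eventually_mono]) auto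
  have "isCont g a"
    using r holomorphic_on_imp_continuous_on[OF r(2)]
    by (simp add: continuous_on_eq_continuous_at)
  then have "isCont (\<lambda>x. Re (g x)) a" by (rule isCont_Re)
  then show "isCont f a" using isCont_cong[OF ev] by simp
qed

lemma locRe_harmonic:
  assumes "locRe S f" "open S"
  shows "harmonic_on S f"
proof -
  have C2: "C2_on S f"
    unfolding C2_on_def
    using locRe_cont[OF assms(1,2)] locRe_pdiff[OF assms(1)]
      locRe_cont[OF locRe_pdiff(1)[OF assms(1)] assms(2)]
      locRe_cont[OF locRe_pdiff(1)[OF locRe_pdiff(1)[OF assms(1)]] assms(2)]
      locRe_pdiff(2)[OF locRe_pdiff(1)[OF assms(1)]]
    by blast
  have lap: "pdiff 1 (pdiff 1 f) z + pdiff \<i> (pdiff \<i> f) z = 0" if z: "z \<in> S" for z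
  proof -
    obtain r g where r: "r > 0" and g: "g holomorphic_on ball z r" "\<forall>x\<in>ball z r. f x = Re (g x)"
      using assms z unfolding locRe_def by blast
    have zb: "z \<in> ball z r" using r by simp
    have h1: "(\<lambda>x. deriv g x * v) holomorphic_on ball z r" for v
      using g by (intro holomorphic_intros) auto
    have e1: "\<forall>x\<in>ball z r. pdiff v f x = Re (deriv g x * v)" for v
      using pdiff_Re_holo(1)[OF g(1) _ g(2)] by blast
    have "pdiff u (pdiff v f) z = Re (deriv (\<lambda>x. deriv g x * v) z * u)" for u v
      using pdiff_Re_holo(1)[OF h1 zb e1] by blast
    moreover have "deriv (\<lambda>x. deriv g x * v) z = deriv (deriv g) z * v" for v
    proof -
      have "deriv g holomorphic_on ball z r" using g by (intro holomorphic_intros) auto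
      then have "deriv g field_differentiable at z"
        using zb holomorphic_on_imp_differentiable_at by blast
      then show ?thesis by (rule deriv_cmult_right)
    qed
    ultimately show ?thesis by simp
  qed
  show ?thesis unfolding harmonic_on_def using C2 lap assms(2) by blast
qed

lemma geom_uconv:
  fixes f :: "nat \<Rightarrow> 'a \<Rightarrow> 'b::banach"
  assumes b: "\<And>n x. x \<in> A \<Longrightarrow> norm (f n x) \<le> C * q ^ n" and q: "0 \<le> q" "q < 1"
  shows "uniformly_convergent_on A (\<lambda>N x. \<Sum>n<N. f n x)"
proof (rule uniformly_summable_comparison_test[OF _ b])
  have "summable (\<lambda>n. C * q ^ n)" using q by (intro summable_mult summable_geometric) auto
  then have lim: "(\<lambda>N. \<Sum>n<N. C * q ^ n) \<longlonglongrightarrow> (\<Sum>n. C * q ^ n)"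
    by (simp add: summable_LIMSEQ)
  show "uniformly_convergent_on A (\<lambda>N x. \<Sum>n<N. C * q ^ n)"
    unfolding uniformly_convergent_on_def
    by (rule exI[of _ "\<lambda>x. \<Sum>n. C * q ^ n"]) (use lim in \<open>auto simp: uniform_limit_iff tendsto_iff\<close>)
qed

lemma geom_ulim0:
  fixes f :: "nat \<Rightarrow> 'a \<Rightarrow> 'b::real_normed_vector"
  assumes b: "\<And>n x. n \<ge> 1 \<Longrightarrow> x \<in> A \<Longrightarrow> norm (f n x) \<le> C * q ^ n" and q: "0 \<le> q" "q < 1"
  shows "uniform_limit A f (\<lambda>x. 0) sequentially"
proof (rule uniform_limitI)
  fix e :: real assume e: "e > 0"
  have "(\<lambda>n. C * q ^ n) \<longlonglongrightarrow> C * 0"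
    using q by (intro tendsto_mult tendsto_const LIMSEQ_power_zero) auto
  then have "eventually (\<lambda>n. \<bar>C * q ^ n\<bar> < e) sequentially"
    using e by (auto simp: tendsto_iff dist_real_def)
  moreover have "eventually (\<lambda>n::nat. n \<ge> 1) sequentially" by (rule eventually_ge_at_top)
  ultimately show "\<forall>\<^sub>F n in sequentially. \<forall>x\<in>A. dist (f n x) 0 < e"
  proof eventually_elim
    case (elim n)
    then show ?case using b by (auto simp: dist_norm) (smt (verit) b)
  qed
qed

lemma ln_diff_bound:
  fixes x y d :: real
  assumes "x \<ge> d" "y \<ge> d" "d > 0"
  shows "\<bar>ln x - ln y\<bar> \<le> \<bar>x - y\<bar> / d"
proof -
  have 1: "ln x - ln y \<le> (x - y) / y" if "x > 0" "y > 0" for x y :: real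
  proof -
    have "ln (x / y) \<le> x / y - 1" using that by (intro ln_le_minus_one) auto
    then show ?thesis using that by (simp add: ln_div field_simps)
  qed
  have a: "ln x - ln y \<le> \<bar>x - y\<bar> / d"
  proof -
    have "ln x - ln y \<le> (x - y) / y" using 1 assms by auto
    also have "\<dots> \<le> \<bar>x - y\<bar> / y" by (intro divide_right_mono) (use assms in auto)
    also have "\<dots> \<le> \<bar>x - y\<bar> / d" by (intro divide_left_mono) (use assms in auto)
    finally show ?thesis .
  qed
  have b: "ln y - ln x \<le> \<bar>x - y\<bar> / d"
  proof -
    have "ln y - ln x \<le> (y - x) / x" using 1 assms by auto
    also have "\<dots> \<le> \<bar>x - y\<bar> / x" by (intro divide_right_mono) (use assms in auto)
    also have "\<dots> \<le> \<bar>x - y\<bar> / d" by (intro divide_left_mono) (use assms in auto)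
    finally show ?thesis .
  qed
  show ?thesis using a b by linarith
qed

lemma ln_cmod_diff_bound:
  fixes z p q :: complex
  assumes "cmod (z - p) \<ge> d" "cmod (z - q) \<ge> d" "d > 0"
  shows "\<bar>ln (cmod (z - p)) - ln (cmod (z - q))\<bar> \<le> cmod (p - q) / d"
proof -
  have "\<bar>cmod (z - p) - cmod (z - q)\<bar> \<le> cmod ((z - p) - (z - q))"
    by (rule norm_triangle_ineq3)
  also have "\<dots> = cmod (p - q)" by (simp add: norm_minus_commute)
  finally have "\<bar>cmod (z - p) - cmod (z - q)\<bar> \<le> cmod (p - q)" .
  then show ?thesis
    using ln_diff_bound[OF assms] assms(3) by (smt (verit) divide_right_mono)
qed

lemma Ln_diff_bound:
  fixes u v :: complex
  assumes "cmod (u - 1) < 1/2" "cmod (v - 1) < 1/2"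
  shows "cmod (Ln u - Ln v) \<le> 2 * cmod (u - v)"
proof -
  let ?S = "ball (1::complex) (1/2)"
  have nn: "z \<notin> \<real>\<^sub>\<le>\<^sub>0" if "z \<in> ?S" for z
  proof -
    have "\<bar>Re z - 1\<bar> \<le> cmod (z - 1)" using abs_Re_le_cmod[of "z - 1"] by simp
    moreover have "cmod (z - 1) < 1/2" using that by (simp add: dist_norm norm_minus_commute)
    ultimately have "Re z > 0" by linarith
    then show ?thesis by (auto simp: complex_nonpos_Reals_iff)
  qed
  have big: "cmod z \<ge> 1/2" if "z \<in> ?S" for z
  proof -
    have "cmod (z - 1) < 1/2" using that by (simp add: dist_norm norm_minus_commute)
    moreover have "1 \<le> cmod z + cmod (z - 1)" using norm_triangle_ineq2[of 1 z]
      by (simp add: norm_minus_commute)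
    ultimately show ?thesis by linarith
  qed
  have "cmod (Ln u - Ln v) \<le> 2 * cmod (u - v)"
  proof (rule field_differentiable_bound[of ?S Ln inverse 2])
    show "convex ?S" by simp
    show "(Ln has_field_derivative inverse z) (at z within ?S)" if "z \<in> ?S" for z
      using has_field_derivative_Ln[OF nn[OF that]] by (rule has_field_derivative_at_within)
    show "cmod (inverse z) \<le> 2" if "z \<in> ?S" for z
    proof -
      have "cmod z \<ge> 1/2" using big[OF that] .
      then have "inverse (cmod z) \<le> inverse (1/2)"
        by (intro le_imp_inverse_le) auto
      then have "inverse (cmod z) \<le> 2" by simp
      then show ?thesis by (simp add: norm_inverse)
    qed
    show "u \<in> ?S" "v \<in> ?S" using assms by (auto simp: dist_norm norm_minus_commute)
  qed
  then show ?thesis .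
qed




locale cfg =
  fixes K :: nat and c :: "nat \<Rightarrow> complex" and R :: "nat \<Rightarrow> real" and z0 :: complex
  assumes K2: "K \<ge> 2"
    and Rpos: "\<forall>j\<in>{1..K}. R j > 0"
    and disj: "\<forall>i\<in>{1..K}. \<forall>j\<in>{1..K}. i \<noteq> j \<longrightarrow> cball (c i) (R i) \<inter> cball (c j) (R j) = {}"
    and z0D: "z0 \<in> Dfin K c R"
    and small: "(real K - 1) * (Pmax K c R z0)\<^sup>2 < 1"
begin

abbreviation "P \<equiv> Pmax K c R z0"
abbreviation "T \<equiv> inv_circ c R"
abbreviation "pt \<equiv> word_pt c R z0"
abbreviation "W \<equiv> words K"

lemma sep:
  assumes "i \<in> {1..K}" "j \<in> {1..K}" "i \<noteq> j"
  shows "cmod (c i - c j) > R i + R j"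
proof (rule ccontr)
  assume "\<not> ?thesis"
  then have le: "cmod (c i - c j) \<le> R i + R j" by simp
  have ri: "R i > 0" "R j > 0" using Rpos assms by auto
  define t where "t = R i / (R i + R j)"
  have t: "0 < t" "t < 1" "1 - t = R j / (R i + R j)" using ri by (auto simp: t_def field_simps)
  define p where "p = c i + of_real t * (c j - c i)"
  have "dist (c i) p = t * cmod (c i - c j)"
    using t by (simp add: p_def dist_norm norm_mult norm_minus_commute)
  also have "\<dots> \<le> t * (R i + R j)" using le t by (intro mult_left_mono) auto
  also have "\<dots> = R i" using ri by (simp add: t_def)
  finally have p1: "p \<in> cball (c i) (R i)" by simp
  have "p - c j = of_real (1 - t) * (c i - c j)" by (simp add: p_def algebra_simps)
  moreover have "cmod (of_real (1 - t) * (c i - c j)) = (1 - t) * cmod (c i - c j)"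
    unfolding norm_mult norm_of_real using t(2) by simp
  ultimately have "dist (c j) p = (1 - t) * cmod (c i - c j)"
    by (simp add: dist_norm norm_minus_commute)
  also have "\<dots> \<le> (1 - t) * (R i + R j)" using le t by (intro mult_left_mono) auto
  also have "\<dots> = R j" using ri t by simp
  finally have p2: "p \<in> cball (c j) (R j)" by simp
  show False using disj assms p1 p2 by blast
qed

lemma Pj_ge:
  assumes j: "j \<in> {1..K}"
  shows "R j / cmod (z0 - c j) \<le> Pj K c R z0 j"
    and "\<And>l. l \<in> {1..K} \<Longrightarrow> l \<noteq> j \<Longrightarrow> R j / (cmod (c j - c l) - R l) \<le> Pj K c R z0 j"
proof -
  have fin: "finite ({R j / cmod (z0 - c j)} \<union> {R j / (cmod (c j - c l) - R l) | l. l \<in> {1..K} \<and> l \<noteq> j})"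
    by auto
  show "R j / cmod (z0 - c j) \<le> Pj K c R z0 j"
    unfolding Pj_def by (rule Max_ge[OF fin]) auto
  show "R j / (cmod (c j - c l) - R l) \<le> Pj K c R z0 j" if "l \<in> {1..K}" "l \<noteq> j" for l
    unfolding Pj_def by (rule Max_ge[OF fin]) (use that in auto)
qed

lemma P_ge: "j \<in> {1..K} \<Longrightarrow> Pj K c R z0 j \<le> P"
  unfolding Pmax_def by (rule Max_ge) auto

lemma P_pos: "P > 0"
proof -
  have "1 \<in> {1..K}" using K2 by auto
  moreover have "cmod (z0 - c 1) > R 1" using z0D \<open>1 \<in> {1..K}\<close> by (auto simp: Dfin_def)
  moreover have "R 1 > 0" using Rpos \<open>1 \<in> {1..K}\<close> by blast
  ultimately have "R 1 / cmod (z0 - c 1) > 0" by (intro divide_pos_pos) auto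
  then show ?thesis using Pj_ge(1)[of 1] P_ge[of 1] \<open>1 \<in> {1..K}\<close> by linarith
qed

lemma P_lt1: "P < 1"
proof -
  have "real K - 1 \<ge> 1" using K2 by auto
  then have "P\<^sup>2 \<le> (real K - 1) * P\<^sup>2" by (simp add: mult_le_cancel_right1)
  then have "P\<^sup>2 < 1" using small by linarith
  then show ?thesis using P_pos by (smt (verit) one_le_power)
qed

definition q where "q = (real K - 1) * P\<^sup>2"

lemma q: "0 \<le> q" "q < 1"
  using small K2 by (auto simp: q_def)

definition G :: "nat \<Rightarrow> complex set" where
  "G j = {a. a = z0 \<or> (\<exists>l\<in>{1..K}. l \<noteq> j \<and> cmod (a - c l) \<le> R l)}"

lemma G_far:
  assumes j: "j \<in> {1..K}" and a: "a \<in> G j"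
  shows "R j \<le> P * cmod (a - c j)" "cmod (a - c j) > R j"
proof -
  have Rj: "R j > 0" using Rpos j by auto
  have "R j \<le> P * cmod (a - c j) \<and> cmod (a - c j) > R j"
  proof (cases "a = z0")
    case True
    have d: "cmod (z0 - c j) > R j" using z0D j by (auto simp: Dfin_def)
    have "R j / cmod (z0 - c j) \<le> P" using Pj_ge(1)[OF j] P_ge[OF j] by linarith
    moreover have "cmod (z0 - c j) > 0" using d Rj by linarith
    ultimately show ?thesis using True d by (auto simp: pos_divide_le_eq mult.commute)
  next
    case False
    then obtain l where l: "l \<in> {1..K}" "l \<noteq> j" "cmod (a - c l) \<le> R l" using a by (auto simp: G_def)
    have s: "cmod (c j - c l) > R j + R l" using sep[OF j l(1)] l(2) by auto
    have tri: "cmod (c j - c l) \<le> cmod (a - c j) + cmod (a - c l)"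
      using norm_triangle_ineq4[of "a - c l" "a - c j"] by (simp add: norm_minus_commute algebra_simps)
    have ge: "cmod (a - c j) \<ge> cmod (c j - c l) - R l" using tri l(3) by linarith
    have "R j / (cmod (c j - c l) - R l) \<le> P" using Pj_ge(2)[OF j l(1,2)] P_ge[OF j] by linarith
    then have "R j \<le> P * (cmod (c j - c l) - R l)" using s Rj by (auto simp: field_simps)
    also have "\<dots> \<le> P * cmod (a - c j)" using ge P_pos by (intro mult_left_mono) auto
    finally show ?thesis using ge s by auto
  qed
  then show "R j \<le> P * cmod (a - c j)" "cmod (a - c j) > R j" by auto
qed

lemma T_norm:
  assumes "a \<noteq> c j"
  shows "cmod (T j a - c j) = (R j)\<^sup>2 / cmod (a - c j)"
proof -
  have "T j a - c j = of_real ((R j)\<^sup>2) / cnj (a - c j)" by (simp add: inv_circ_def)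
  then show ?thesis by (simp add: norm_divide complex_mod_cnj norm_power del: complex_cnj_diff)
qed

lemma T_in:
  assumes j: "j \<in> {1..K}" and a: "a \<in> G j"
  shows "cmod (T j a - c j) \<le> R j * P"
proof -
  have f: "R j \<le> P * cmod (a - c j)" "cmod (a - c j) > R j" using G_far[OF j a] by auto
  have Rj: "R j > 0" using Rpos j by auto
  have "cmod (T j a - c j) = (R j)\<^sup>2 / cmod (a - c j)" using f Rj by (intro T_norm) auto
  also have "\<dots> = R j * (R j / cmod (a - c j))" by (simp add: power2_eq_square)
  also have "\<dots> \<le> R j * P"
  proof -
    have "cmod (a - c j) > 0" using f Rj by linarith
    then have "R j / cmod (a - c j) \<le> P" using f by (simp add: pos_divide_le_eq mult.commute)
    then show ?thesis using Rj by (intro mult_left_mono) auto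
  qed
  finally show ?thesis .
qed

lemma T_lip:
  assumes j: "j \<in> {1..K}" and a: "a \<in> G j" and b: "b \<in> G j"
  shows "cmod (T j a - T j b) \<le> P\<^sup>2 * cmod (a - b)"
proof -
  have fa: "R j \<le> P * cmod (a - c j)" "cmod (a - c j) > R j" using G_far[OF j a] by auto
  have fb: "R j \<le> P * cmod (b - c j)" "cmod (b - c j) > R j" using G_far[OF j b] by auto
  have Rj: "R j > 0" using Rpos j by auto
  have an: "a - c j \<noteq> 0" "b - c j \<noteq> 0" using fa fb Rj by auto
  have "T j a - T j b = of_real ((R j)\<^sup>2) * (cnj (b - c j) - cnj (a - c j)) / (cnj (a - c j) * cnj (b - c j))"
    using an by (simp add: inv_circ_def field_simps)
  then have "cmod (T j a - T j b) = (R j)\<^sup>2 * cmod (a - b) / (cmod (a - c j) * cmod (b - c j))"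
    by (simp add: norm_mult norm_divide complex_cnj_diff[symmetric] norm_minus_commute complex_mod_cnj norm_power del: complex_cnj_diff)
  also have "\<dots> = (R j / cmod (a - c j)) * (R j / cmod (b - c j)) * cmod (a - b)"
    by (simp add: power2_eq_square)
  also have "\<dots> \<le> P * P * cmod (a - b)"
  proof -
    have "cmod (a - c j) > 0" "cmod (b - c j) > 0" using fa fb Rj by linarith+
    then have "R j / cmod (a - c j) \<le> P" "R j / cmod (b - c j) \<le> P" using fa fb by (simp_all add: pos_divide_le_eq mult.commute)
    moreover have "R j / cmod (a - c j) \<ge> 0" "R j / cmod (b - c j) \<ge> 0" using Rj by auto
    ultimately show ?thesis by (intro mult_right_mono mult_mono) auto
  qed
  finally show ?thesis by (simp add: power2_eq_square)
qed

end




lemma words_0: "words K 0 = {[]}"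
  by (auto simp: words_def)

lemma words_Cons_iff:
  "(i # v) \<in> words K (Suc M) \<longleftrightarrow> i \<in> {1..K} \<and> v \<in> words K M \<and> (v \<noteq> [] \<longrightarrow> hd v \<noteq> i)"
proof -
  have "(\<forall>k. Suc k < Suc M \<longrightarrow> (i # v) ! k \<noteq> (i # v) ! Suc k) \<longleftrightarrow>
        (M > 0 \<longrightarrow> i \<noteq> v ! 0) \<and> (\<forall>k. Suc k < M \<longrightarrow> v ! k \<noteq> v ! Suc k)"
    (is "?A \<longleftrightarrow> ?B")
  proof
    assume A: ?A
    show ?B
    proof
      show "M > 0 \<longrightarrow> i \<noteq> v ! 0" using A[rule_format, of 0] by auto
      show "\<forall>k. Suc k < M \<longrightarrow> v ! k \<noteq> v ! Suc k" using A by (metis Suc_less_eq nth_Cons_Suc)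
    qed
  next
    assume B: ?B
    show ?A
    proof (intro allI impI)
      fix k assume "Suc k < Suc M"
      then show "(i # v) ! k \<noteq> (i # v) ! Suc k"
        using B by (cases k) auto
    qed
  qed
  then show ?thesis
    by (auto simp: words_def hd_conv_nth)
qed

lemma words_snoc_iff:
  "(w @ [i]) \<in> words K (Suc M) \<longleftrightarrow> w \<in> words K M \<and> i \<in> {1..K} \<and> (w \<noteq> [] \<longrightarrow> last w \<noteq> i)"
proof (cases "length w = M")
  case True
  have "(\<forall>k. Suc k < Suc M \<longrightarrow> (w @ [i]) ! k \<noteq> (w @ [i]) ! Suc k) \<longleftrightarrow>
        (M > 0 \<longrightarrow> w ! (M - 1) \<noteq> i) \<and> (\<forall>k. Suc k < M \<longrightarrow> w ! k \<noteq> w ! Suc k)"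
    (is "?A \<longleftrightarrow> ?B")
  proof
    assume A: ?A
    show ?B
    proof
      show "M > 0 \<longrightarrow> w ! (M - 1) \<noteq> i" using A[rule_format, of "M - 1"] True
        by (auto simp: nth_append)
      show "\<forall>k. Suc k < M \<longrightarrow> w ! k \<noteq> w ! Suc k"
      proof (intro allI impI)
        fix k assume k: "Suc k < M"
        then show "w ! k \<noteq> w ! Suc k" using A[rule_format, of k] True by (auto simp: nth_append)
      qed
    qed
  next
    assume B: ?B
    show ?A
    proof (intro allI impI)
      fix k assume k: "Suc k < Suc M"
      show "(w @ [i]) ! k \<noteq> (w @ [i]) ! Suc k"
      proof (cases "Suc k < M")
        case True
        then show ?thesis using B \<open>length w = M\<close> by (auto simp: nth_append)
      next
        case False
        then have "k = M - 1" "M > 0" using k by auto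
        then show ?thesis using B \<open>length w = M\<close> by (auto simp: nth_append)
      qed
    qed
  qed
  then show ?thesis using True
    by (auto simp: words_def last_conv_nth)
next
  case False
  then show ?thesis by (auto simp: words_def)
qed

lemma words_finite: "finite (words K M)"
proof -
  have "words K M \<subseteq> {w. set w \<subseteq> {1..K} \<and> length w = M}" by (auto simp: words_def)
  moreover have "finite {w. set w \<subseteq> {1..K} \<and> length w = M}"
    by (rule finite_lists_length_eq) auto
  ultimately show ?thesis by (rule finite_subset)
qed

lemma words_set: "w \<in> words K M \<Longrightarrow> set w \<subseteq> {1..K}"
  by (auto simp: words_def)

lemma words_hd: "w \<in> words K M \<Longrightarrow> w \<noteq> [] \<Longrightarrow> hd w \<in> {1..K}"
  using words_set hd_in_set by blast

lemma words_last: "w \<in> words K M \<Longrightarrow> w \<noteq> [] \<Longrightarrow> last w \<in> {1..K}"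
  using words_set last_in_set by blast

lemma words_len: "w \<in> words K M \<Longrightarrow> length w = M"
  by (auto simp: words_def)

context cfg
begin

lemma fold_props:
  "\<And>M. w \<in> W M \<Longrightarrow> w \<noteq> [] \<Longrightarrow> a \<in> G (last w) \<Longrightarrow> b \<in> G (last w) \<Longrightarrow>
     cmod (foldr T w a - c (hd w)) \<le> R (hd w) * P \<and>
     cmod (foldr T w a - foldr T w b) \<le> P ^ (2 * length w) * cmod (a - b)"
proof (induction w arbitrary: a b)
  case Nil
  then show ?case by simp
next
  case (Cons i v)
  then obtain M' where M': "M = Suc M'" by (cases M) (auto simp: words_def)
  have iv: "i \<in> {1..K}" "v \<in> W M'" "v \<noteq> [] \<longrightarrow> hd v \<noteq> i"
    using Cons.prems(1) M' words_Cons_iff by auto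
  show ?case
  proof (cases "v = []")
    case True
    then have ab: "a \<in> G i" "b \<in> G i" using Cons.prems by auto
    show ?thesis using T_in[OF iv(1) ab(1)] T_lip[OF iv(1) ab] True by simp
  next
    case False
    have ab: "a \<in> G (last v)" "b \<in> G (last v)" using Cons.prems False by auto
    have IH: "cmod (foldr T v a - c (hd v)) \<le> R (hd v) * P"
      "cmod (foldr T v a - foldr T v b) \<le> P ^ (2 * length v) * cmod (a - b)"
      "cmod (foldr T v b - c (hd v)) \<le> R (hd v) * P"
      using Cons.IH[OF iv(2) False ab] Cons.IH[OF iv(2) False ab(2) ab(2)] by auto
    have hv: "hd v \<in> {1..K}" "hd v \<noteq> i" using words_hd[OF iv(2) False] iv(3) False by auto
    have Rh: "R (hd v) > 0" using Rpos hv by auto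
    have "R (hd v) * P \<le> R (hd v)" using Rh P_lt1 by (simp add: mult_le_cancel_left1)
    then have inG: "foldr T v a \<in> G i" "foldr T v b \<in> G i"
      using IH(1,3) hv unfolding G_def by (auto intro!: bexI[of _ "hd v"])
    have "cmod (foldr T (i # v) a - foldr T (i # v) b) \<le> P\<^sup>2 * cmod (foldr T v a - foldr T v b)"
      using T_lip[OF iv(1) inG] by simp
    also have "\<dots> \<le> P\<^sup>2 * (P ^ (2 * length v) * cmod (a - b))"
      using IH(2) by (intro mult_left_mono) auto
    also have "\<dots> = P ^ (2 * length (i # v)) * cmod (a - b)"
      by (simp add: power_add power_mult power2_eq_square)
    finally show ?thesis using T_in[OF iv(1) inG(1)] by simp
  qed
qed

lemma z0_G: "z0 \<in> G j" by (simp add: G_def)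

lemma pt_in:
  assumes "w \<in> W M" "w \<noteq> []"
  shows "cmod (pt w - c (hd w)) \<le> R (hd w) * P"
  using fold_props[OF assms z0_G z0_G] by (simp add: word_pt_def)

definition B where "B = (\<Sum>i\<in>{1..K}. cmod (z0 - T i z0))"

lemma B_nonneg: "B \<ge> 0" by (simp add: B_def sum_nonneg)

lemma pt_snoc:
  assumes w: "w \<in> W M" "w \<noteq> []" and i: "i \<in> {1..K}" "i \<noteq> last w"
  shows "cmod (pt w - pt (w @ [i])) \<le> P ^ (2 * M) * B"
proof -
  have Ri: "R i > 0" using Rpos i by auto
  have "cmod (T i z0 - c i) \<le> R i * P" using T_in[OF i(1) z0_G] .
  also have "\<dots> \<le> R i" using Ri P_lt1 by (simp add: mult_le_cancel_left1)
  finally have "T i z0 \<in> G (last w)" using i unfolding G_def by (auto intro!: bexI[of _ i])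
  then have "cmod (foldr T w z0 - foldr T w (T i z0)) \<le> P ^ (2 * length w) * cmod (z0 - T i z0)"
    using fold_props[OF w z0_G] by blast
  also have "\<dots> \<le> P ^ (2 * M) * B"
  proof -
    have "cmod (z0 - T i z0) \<le> B" unfolding B_def
      by (rule member_le_sum) (use i in auto)
    then show ?thesis using words_len[OF w(1)] P_pos by (simp add: mult_left_mono)
  qed
  finally show ?thesis by (simp add: word_pt_def)
qed

definition good :: "real \<Rightarrow> complex \<Rightarrow> bool" where
  "good d z \<longleftrightarrow> d > 0 \<and> (\<forall>l\<in>{1..K}. cmod (z - c l) \<ge> R l * P + d)"

lemma pt_far:
  assumes "good d z" "w \<in> W M" "w \<noteq> []"
  shows "cmod (z - pt w) \<ge> d"
proof -
  have h: "hd w \<in> {1..K}" using words_hd assms by blast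
  have "cmod (z - c (hd w)) \<le> cmod (z - pt w) + cmod (pt w - c (hd w))"
    using norm_triangle_ineq[of "z - pt w" "pt w - c (hd w)"] by simp
  then show ?thesis using pt_in[OF assms(2,3)] assms(1) h unfolding good_def by fastforce
qed

end




context cfg
begin

definition E :: "nat list \<Rightarrow> nat set" where "E w = {1..K} - {last w}"

lemma E_fin: "finite (E w)" by (simp add: E_def)

lemma card_E: "w \<in> W M \<Longrightarrow> w \<noteq> [] \<Longrightarrow> card (E w) = K - 1"
  using words_last[of w K M] by (simp add: E_def card_Diff_singleton)

lemma words_ne: "w \<in> W M \<Longrightarrow> M \<ge> 1 \<Longrightarrow> w \<noteq> []"
  using words_len by fastforce

lemma sum_ext:
  assumes M: "M \<ge> 1" and Q: "\<And>w i. w \<noteq> [] \<Longrightarrow> Q (w @ [i]) = Q w"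
  shows "(\<Sum>u\<in>{u\<in>W (Suc M). Q u}. g u) = (\<Sum>w\<in>{w\<in>W M. Q w}. \<Sum>i\<in>E w. g (w @ [i]))"
proof -
  let ?A = "Sigma {w\<in>W M. Q w} E"
  have "(\<Sum>w\<in>{w\<in>W M. Q w}. \<Sum>i\<in>E w. g (w @ [i])) = (\<Sum>(w, i)\<in>?A. g (w @ [i]))"
    by (rule sum.Sigma) (auto simp: E_fin words_finite)
  also have "\<dots> = (\<Sum>u\<in>(\<lambda>(w, i). w @ [i]) ` ?A. g u)"
  proof -
    have inj: "inj_on (\<lambda>(w, i). w @ [i]) ?A" by (auto simp: inj_on_def)
    show ?thesis by (rule sum.reindex_cong[OF inj refl, symmetric]) auto
  qed
  also have "(\<lambda>(w, i). w @ [i]) ` ?A = {u\<in>W (Suc M). Q u}"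
  proof
    show "(\<lambda>(w, i). w @ [i]) ` ?A \<subseteq> {u\<in>W (Suc M). Q u}"
    proof clarify
      fix w i assume "w \<in> W M" "Q w" "i \<in> E w"
      moreover have "w \<noteq> []" using \<open>w \<in> W M\<close> M words_ne by blast
      ultimately show "w @ [i] \<in> W (Suc M) \<and> Q (w @ [i])"
        using words_snoc_iff Q by (auto simp: E_def)
    qed
    show "{u\<in>W (Suc M). Q u} \<subseteq> (\<lambda>(w, i). w @ [i]) ` ?A"
    proof clarify
      fix u assume u: "u \<in> W (Suc M)" "Q u"
      have "length u = Suc M" using words_len u by blast
      then have lb: "length (butlast u) = M" by simp
      have ne: "u \<noteq> []" "butlast u \<noteq> []"
        using M \<open>length u = Suc M\<close> lb by (auto simp del: length_butlast)
      then have ueq: "u = butlast u @ [last u]" by simp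
      then have "butlast u @ [last u] \<in> W (Suc M)" using u by simp
      note bb = words_snoc_iff[THEN iffD1, OF this]
      then have b: "butlast u \<in> W M" "last u \<in> E (butlast u)"
        using ne by (auto simp: E_def)
      have "Q (butlast u)" using Q[OF ne(2), of "last u"] ueq u(2) by simp
      then show "u \<in> (\<lambda>(w, i). w @ [i]) ` ?A"
        using b ueq by (intro image_eqI[of _ _ "(butlast u, last u)"]) auto
    qed
  qed
  finally show ?thesis ..
qed

lemma card_W1: "card (W 1) = K"
proof -
  have "W 1 = (\<lambda>i. [i]) ` {1..K}"
  proof
    show "W 1 \<subseteq> (\<lambda>i. [i]) ` {1..K}"
    proof
      fix w assume "w \<in> W 1"
      then obtain i where "w = [i]" using words_len by (metis length_0_conv length_Suc_conv One_nat_def)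
      moreover have "set w \<subseteq> {1..K}" using \<open>w \<in> W 1\<close> words_set by blast
      ultimately show "w \<in> (\<lambda>i. [i]) ` {1..K}" by auto
    qed
    show "(\<lambda>i. [i]) ` {1..K} \<subseteq> W 1" by (auto simp: words_def)
  qed
  then have "card (W 1) = card ((\<lambda>i. [i]) ` {1..K})" by (rule arg_cong)
  also have "\<dots> = card {1..K}" by (rule card_image) (auto simp: inj_on_def)
  finally show ?thesis by simp
qed

lemma card_W: "M \<ge> 1 \<Longrightarrow> card (W M) = K * (K - 1) ^ (M - 1)"
proof (induction M rule: dec_induct)
  case base then show ?case using card_W1 by simp
next
  case (step M)
  have "card (W (Suc M)) = (\<Sum>u\<in>{u\<in>W (Suc M). True}. 1)" by simp
  also have "\<dots> = (\<Sum>w\<in>{w\<in>W M. True}. \<Sum>i\<in>E w. 1)"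
    by (rule sum_ext) (use step in auto)
  also have "\<dots> = (\<Sum>w\<in>W M. K - 1)"
    using card_E words_ne step by (intro sum.cong) auto
  also have "\<dots> = K * (K - 1) ^ (Suc M - 1)"
    using step by (cases M) auto
  finally show ?case .
qed

lemma sum_bound:
  fixes F :: "nat list \<Rightarrow> nat \<Rightarrow> 'b::real_normed_vector"
  assumes Ws: "Ws \<subseteq> W M" and M: "M \<ge> 1" and b: "\<And>w i. w \<in> Ws \<Longrightarrow> i \<in> E w \<Longrightarrow> norm (F w i) \<le> X"
    and X: "X \<ge> 0"
  shows "norm (\<Sum>w\<in>Ws. \<Sum>i\<in>E w. F w i) \<le> real K * (real K - 1) ^ M * X"
proof -
  have "norm (\<Sum>w\<in>Ws. \<Sum>i\<in>E w. F w i) \<le> (\<Sum>w\<in>Ws. \<Sum>i\<in>E w. norm (F w i))"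
    by (rule order_trans[OF norm_sum sum_mono[OF norm_sum]])
  also have "\<dots> \<le> (\<Sum>w\<in>Ws. \<Sum>i\<in>E w. X)" by (intro sum_mono b)
  also have "\<dots> = (\<Sum>w\<in>Ws. real (K - 1) * X)"
    using card_E Ws M words_ne by (intro sum.cong) auto
  also have "\<dots> = real (card Ws) * real (K - 1) * X" by simp
  also have "\<dots> \<le> real (card (W M)) * real (K - 1) * X"
  proof (cases "Ws = {}")
    case True then show ?thesis using X by simp
  next
    case False
    have "card Ws \<le> card (W M)" using Ws by (intro card_mono words_finite)
    then show ?thesis using X by (intro mult_right_mono) auto
  qed
  also have "\<dots> = real K * (real K - 1) ^ M * X"
  proof -
    have "real (card (W M)) * real (K - 1) = real K * (real K - 1) ^ (M - 1) * (real K - 1)"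
      using card_W[OF M] K2 by (simp add: of_nat_diff)
    also have "\<dots> = real K * (real K - 1) ^ M"
      using M by (cases M) auto
    finally show ?thesis by simp
  qed
  finally show ?thesis .
qed

definition S :: "nat \<Rightarrow> complex \<Rightarrow> real" where
  "S M z = (\<Sum>w\<in>W M. ln (cmod (z - pt w)))"

definition Dr :: "nat list set \<Rightarrow> complex \<Rightarrow> real" where
  "Dr Ws z = (\<Sum>w\<in>Ws. \<Sum>i\<in>E w. (ln (cmod (z - pt w)) - ln (cmod (z - pt (w @ [i])))))"

lemma term_bound:
  assumes "good d z" "w \<in> W M" "M \<ge> 1" "i \<in> E w"
  shows "\<bar>ln (cmod (z - pt w)) - ln (cmod (z - pt (w @ [i])))\<bar> \<le> B / d * (P\<^sup>2) ^ M"
proof -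
  have ne: "w \<noteq> []" using assms words_ne by blast
  have i: "i \<in> {1..K}" "i \<noteq> last w" using assms(4) by (auto simp: E_def)
  have w2: "w @ [i] \<in> W (Suc M)" using words_snoc_iff assms(2) i ne by auto
  have d: "d > 0" using assms(1) by (simp add: good_def)
  have "\<bar>ln (cmod (z - pt w)) - ln (cmod (z - pt (w @ [i])))\<bar> \<le> cmod (pt w - pt (w @ [i])) / d"
    by (rule ln_cmod_diff_bound[OF pt_far[OF assms(1,2) ne] pt_far[OF assms(1) w2] d]) simp
  also have "\<dots> \<le> P ^ (2 * M) * B / d"
    using pt_snoc[OF assms(2) ne i] d by (simp add: divide_right_mono)
  also have "\<dots> = B / d * (P\<^sup>2) ^ M" by (simp add: power_mult)
  finally show ?thesis .
qed

lemma Dr_bound: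
  assumes "good d z" "Ws \<subseteq> W M" "M \<ge> 1"
  shows "\<bar>Dr Ws z\<bar> \<le> real K * (B / d) * q ^ M"
proof -
  have "\<bar>Dr Ws z\<bar> \<le> real K * (real K - 1) ^ M * (B / d * (P\<^sup>2) ^ M)"
    unfolding Dr_def real_norm_def[symmetric]
  proof (rule sum_bound[OF assms(2,3)])
    show "B / d * (P\<^sup>2) ^ M \<ge> 0" using B_nonneg assms(1) by (simp add: good_def)
  next
    fix w i assume "w \<in> Ws" "i \<in> E w"
    then show "norm (ln (cmod (z - pt w)) - ln (cmod (z - pt (w @ [i])))) \<le> B / d * (P\<^sup>2) ^ M"
      using term_bound[OF assms(1) _ assms(3)] assms(2) by auto
  qed
  also have "\<dots> = real K * (B / d) * q ^ M" by (simp add: q_def power_mult_distrib)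
  finally show ?thesis .
qed

lemma Dr_eq:
  assumes M: "M \<ge> 1" and Q: "\<And>w i. w \<noteq> [] \<Longrightarrow> Q (w @ [i]) = Q w"
  shows "Dr {w\<in>W M. Q w} z = (real K - 1) * (\<Sum>w\<in>{w\<in>W M. Q w}. ln (cmod (z - pt w)))
      - (\<Sum>u\<in>{u\<in>W (Suc M). Q u}. ln (cmod (z - pt u)))"
proof -
  have "Dr {w\<in>W M. Q w} z = (\<Sum>w\<in>{w\<in>W M. Q w}. \<Sum>i\<in>E w. ln (cmod (z - pt w)))
      - (\<Sum>w\<in>{w\<in>W M. Q w}. \<Sum>i\<in>E w. ln (cmod (z - pt (w @ [i]))))"
    by (simp add: Dr_def sum_subtractf)
  also have "(\<Sum>w\<in>{w\<in>W M. Q w}. \<Sum>i\<in>E w. ln (cmod (z - pt w)))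
      = (\<Sum>w\<in>{w\<in>W M. Q w}. (real K - 1) * ln (cmod (z - pt w)))"
    using card_E words_ne M K2 by (intro sum.cong) (auto simp: of_nat_diff)
  also have "(\<Sum>w\<in>{w\<in>W M. Q w}. \<Sum>i\<in>E w. ln (cmod (z - pt (w @ [i]))))
      = (\<Sum>u\<in>{u\<in>W (Suc M). Q u}. ln (cmod (z - pt u)))"
    by (rule sum_ext[symmetric, OF M Q])
  finally show ?thesis by (simp add: sum_distrib_left)
qed

end




context cfg
begin

definition hterm :: "nat \<Rightarrow> complex \<Rightarrow> real" where
  "hterm m z = -(1 / (2 * pi)) * ((-1) ^ Suc m * Dr (W (Suc m)) z / real K)"

definition hh :: "nat \<Rightarrow> complex \<Rightarrow> real" where
  "hh N z = (1 / (2 * pi)) * (S 1 z / real K) + (\<Sum>m<N. hterm m z)"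

lemma S0: "S 0 z = ln (cmod (z - z0))"
  by (simp add: S_def words_0 word_pt_def)

lemma D_eq: "M \<ge> 1 \<Longrightarrow> Dr (W M) z = (real K - 1) * S M z - S (Suc M) z"
  using Dr_eq[of M "\<lambda>_. True" z] by (simp add: S_def)

lemma Psi_eq:
  "((real K - 1) * (\<Sum>M\<le>N. (-1) ^ M * S M z) + (\<Sum>M\<le>Suc N. (-1) ^ M * S M z)) / real K
   = S 0 z + (- S 1 z / real K + (\<Sum>m<N. (-1) ^ Suc m * Dr (W (Suc m)) z / real K))"
proof (induction N)
  case 0
  have "K > 0" using K2 by auto
  then show ?case by (simp add: field_simps)
next
  case (Suc N)
  have Kp: "real K > 0" using K2 by auto
  let ?L = "\<lambda>N. ((real K - 1) * (\<Sum>M\<le>N. (-1) ^ M * S M z) + (\<Sum>M\<le>Suc N. (-1) ^ M * S M z)) / real K"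
  have "?L (Suc N) = ?L N + (-1) ^ Suc N * ((real K - 1) * S (Suc N) z - S (Suc (Suc N)) z) / real K"
    using Kp by (simp add: field_simps)
  also have "(real K - 1) * S (Suc N) z - S (Suc (Suc N)) z = Dr (W (Suc N)) z"
    using D_eq[of "Suc N" z] by simp
  finally show ?case using Suc.IH by simp
qed

lemma psi_star_Psi:
  "psi_s_star K c R z0 N z = -(1 / (2 * pi)) *
     (((real K - 1) * (\<Sum>M\<le>N. (-1) ^ M * S M z) + (\<Sum>M\<le>Suc N. (-1) ^ M * S M z)) / real K)"
proof -
  have ps: "psi_s K c R z0 n z = -(1 / (2 * pi)) * (\<Sum>M\<le>n. (-1) ^ M * S M z)" for n
    by (simp add: psi_s_def S_def)
  have gen: "((k - 1) * (a * x) + a * y) / k = a * (((k - 1) * x + y) / k)" for k a x y :: real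
    by (simp add: algebra_simps add_divide_distrib)
  show ?thesis unfolding psi_s_star_def ps by (rule gen)
qed

lemma psi_star_hh:
  "psi_s_star K c R z0 N z + ln (cmod (z - z0)) / (2 * pi) = hh N z"
proof -
  have ps: "psi_s K c R z0 n z = -(1 / (2 * pi)) * (\<Sum>M\<le>n. (-1) ^ M * S M z)" for n
    by (simp add: psi_s_def S_def)
  have "psi_s_star K c R z0 N z = -(1 / (2 * pi)) *
     (((real K - 1) * (\<Sum>M\<le>N. (-1) ^ M * S M z) + (\<Sum>M\<le>Suc N. (-1) ^ M * S M z)) / real K)"
  proof -
    have gen: "((k - 1) * (a * x) + a * y) / k = a * (((k - 1) * x + y) / k)" for k a x y :: real
      by (simp add: algebra_simps add_divide_distrib)
    show ?thesis unfolding psi_s_star_def ps by (rule gen)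
  qed
  also have "\<dots> = -(1 / (2 * pi)) * (S 0 z + (- S 1 z / real K + (\<Sum>m<N. (-1) ^ Suc m * Dr (W (Suc m)) z / real K)))"
    by (simp only: Psi_eq)
  finally show ?thesis
    by (simp add: hh_def hterm_def S0 sum_distrib_left sum_negf field_simps)
qed

lemma hterm_bound:
  assumes "good d z"
  shows "norm (hterm m z) \<le> (B * q / (2 * pi * d)) * q ^ m"
proof -
  have Kp: "real K > 0" using K2 by auto
  have d: "d > 0" using assms by (simp add: good_def)
  have "\<bar>Dr (W (Suc m)) z\<bar> \<le> real K * (B / d) * q ^ Suc m"
    by (rule Dr_bound[OF assms]) auto
  then have "\<bar>Dr (W (Suc m)) z\<bar> / real K \<le> (B / d) * q ^ Suc m"
    using Kp by (simp add: divide_le_eq mult_ac)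
  then have "\<bar>Dr (W (Suc m)) z\<bar> / real K / (2 * pi) \<le> (B / d) * q ^ Suc m / (2 * pi)"
    by (rule divide_right_mono) auto
  moreover have "norm (hterm m z) = \<bar>Dr (W (Suc m)) z\<bar> / real K / (2 * pi)"
    by (simp add: hterm_def abs_mult abs_divide power_abs)
  moreover have "(B / d) * q ^ Suc m / (2 * pi) = (B * q / (2 * pi * d)) * q ^ m"
    by (simp add: field_simps)
  ultimately show ?thesis by simp
qed

lemma hh_uconv:
  assumes "\<And>z. z \<in> A \<Longrightarrow> good d z"
  shows "uniformly_convergent_on A hh"
proof -
  have "uniformly_convergent_on A (\<lambda>N z. \<Sum>m<N. hterm m z)"
    by (rule geom_uconv[OF hterm_bound[OF assms] q])
  then have "uniformly_convergent_on A (\<lambda>N z. (1 / (2 * pi)) * (S 1 z / real K) + (\<Sum>m<N. hterm m z))"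
    by (intro uniformly_convergent_add uniformly_convergent_on_const)
  then show ?thesis by (simp add: hh_def[abs_def])
qed

end




context cfg
begin

lemma good_compact:
  assumes A: "compact A" and pos: "\<And>z l. z \<in> A \<Longrightarrow> l \<in> {1..K} \<Longrightarrow> cmod (z - c l) > R l * P"
  shows "\<exists>d. \<forall>z\<in>A. good d z"
proof (cases "A = {}")
  case True then show ?thesis by auto
next
  case False
  have "\<forall>l\<in>{1..K}. \<exists>e>0. \<forall>z\<in>A. cmod (z - c l) \<ge> R l * P + e"
  proof
    fix l assume l: "l \<in> {1..K}"
    have "continuous_on A (\<lambda>z. cmod (z - c l) - R l * P)" by (intro continuous_intros)
    then obtain x where x: "x \<in> A" "\<forall>y\<in>A. cmod (x - c l) - R l * P \<le> cmod (y - c l) - R l * P"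
      using continuous_attains_inf[OF A False] by blast
    show "\<exists>e>0. \<forall>z\<in>A. cmod (z - c l) \<ge> R l * P + e"
      using x pos[OF x(1) l] by (intro exI[of _ "cmod (x - c l) - R l * P"]) auto
  qed
  then obtain e where e: "\<forall>l\<in>{1..K}. e l > 0 \<and> (\<forall>z\<in>A. cmod (z - c l) \<ge> R l * P + e l)"
    by metis
  define d where "d = Min (e ` {1..K})"
  have ne: "{1..K} \<noteq> {}" using K2 by auto
  have dpos: "d > 0" unfolding d_def using e ne by (subst Min_gr_iff) auto
  have dle: "d \<le> e l" if "l \<in> {1..K}" for l unfolding d_def using that by (intro Min_le) auto
  show ?thesis
    using e dle dpos unfolding good_def by (intro exI[of _ d]) (fastforce)
qed

lemma open_Dfin: "open (Dfin K c R)"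
proof -
  have "Dfin K c R = (\<Inter>j\<in>{1..K}. {z. R j < cmod (z - c j)})" by (auto simp: Dfin_def)
  moreover have "open {z. R j < cmod (z - c j)}" for j
    by (intro open_Collect_less continuous_intros)
  ultimately show ?thesis by auto
qed

lemma Dfin_pos: "z \<in> Dfin K c R \<Longrightarrow> l \<in> {1..K} \<Longrightarrow> cmod (z - c l) > R l * P"
proof -
  assume z: "z \<in> Dfin K c R" and l: "l \<in> {1..K}"
  have "R l * P \<le> R l" using Rpos l P_lt1 by (simp add: mult_le_cancel_left1)
  moreover have "cmod (z - c l) > R l" using z l unfolding Dfin_def by blast
  ultimately show ?thesis by linarith
qed

lemma Dfin_good: "z \<in> Dfin K c R \<Longrightarrow> \<exists>d. good d z"
  using good_compact[of "{z}"] Dfin_pos by auto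

lemma sphere_pos:
  assumes j: "j \<in> {1..K}" and z: "z \<in> sphere (c j) (R j)" and l: "l \<in> {1..K}"
  shows "cmod (z - c l) > R l * P"
proof (cases "l = j")
  case True
  have "R j * P < R j" using Rpos j P_lt1 by simp
  then show ?thesis using z True by (simp add: dist_norm norm_minus_commute)
next
  case False
  have s: "cmod (c j - c l) > R j + R l" using sep[OF j l] False by auto
  have "cmod (c j - c l) \<le> cmod (z - c j) + cmod (z - c l)"
    using norm_triangle_ineq4[of "z - c l" "z - c j"] by (simp add: norm_minus_commute algebra_simps)
  moreover have "cmod (z - c j) = R j" using z by (simp add: dist_norm norm_minus_commute)
  moreover have "R l * P \<le> R l" using Rpos l P_lt1 by (simp add: mult_le_cancel_left1)
  ultimately show ?thesis using s by linarith
qed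

lemma reflect:
  assumes z: "cmod (z - c j) = R j" and a: "a \<noteq> c j"
  shows "cmod (z - T j a) = R j * cmod (z - a) / cmod (a - c j)"
proof -
  define u where "u = z - c j"
  define b where "b = a - c j"
  have b0: "b \<noteq> 0" using a by (simp add: b_def)
  have R2: "of_real ((R j)\<^sup>2) = u * cnj u"
    using complex_norm_square[of u] z by (simp add: u_def)
  have Ta: "T j a = c j + of_real ((R j)\<^sup>2) / cnj b"
    unfolding inv_circ_def b_def by simp
  have "z - T j a = u - u * cnj u / cnj b"
    unfolding Ta R2 by (simp add: u_def)
  also have "\<dots> = u * cnj (b - u) / cnj b" using b0 by (simp add: field_simps)
  finally have "cmod (z - T j a) = cmod u * cmod (b - u) / cmod b"
    by (simp add: norm_mult norm_divide complex_mod_cnj complex_cnj_diff[symmetric] del: complex_cnj_diff)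
  moreover have "b - u = a - z" by (simp add: b_def u_def)
  ultimately show ?thesis using z by (simp add: u_def b_def norm_minus_commute)
qed

end




context cfg
begin

definition Ow where "Ow j M = {w\<in>W M. w = [] \<or> hd w \<noteq> j}"
definition Hw where "Hw j M = {w\<in>W M. w \<noteq> [] \<and> hd w = j}"
definition Y where "Y j M z = (\<Sum>w\<in>Ow j M. ln (cmod (z - pt w)))"
definition X where "X j M z = (\<Sum>w\<in>Hw j M. ln (cmod (z - pt w)))"
definition kap where "kap j M = (\<Sum>v\<in>Ow j M. (ln (R j) - ln (cmod (pt v - c j))))"
definition gam where "gam j N = (\<Sum>m<N. (-1) ^ Suc m * kap j m)"

lemma pt_Gj:
  assumes j: "j \<in> {1..K}" and v: "v \<in> Ow j M"
  shows "pt v \<in> G j"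
proof (cases "v = []")
  case True then show ?thesis by (simp add: word_pt_def z0_G)
next
  case False
  have v1: "v \<in> W M" "hd v \<noteq> j" using v False by (auto simp: Ow_def)
  have h: "hd v \<in> {1..K}" using words_hd[OF v1(1) False] .
  have "R (hd v) * P \<le> R (hd v)" using Rpos h P_lt1 by (simp add: mult_le_cancel_left1)
  then have "cmod (pt v - c (hd v)) \<le> R (hd v)" using pt_in[OF v1(1) False] by linarith
  then show ?thesis using h v1(2) unfolding G_def by (auto intro!: bexI[of _ "hd v"])
qed

lemma S_split: "S M z = X j M z + Y j M z"
proof -
  have "W M = Hw j M \<union> Ow j M" "Hw j M \<inter> Ow j M = {}" by (auto simp: Hw_def Ow_def)
  moreover have "finite (Hw j M)" "finite (Ow j M)"
    by (auto simp: Hw_def Ow_def intro: finite_subset[OF _ words_finite])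
  ultimately show ?thesis unfolding S_def X_def Y_def by (metis sum.union_disjoint)
qed

lemma X_0: "X j 0 z = 0"
proof -
  have "Hw j 0 = {}" by (auto simp: Hw_def words_0)
  then show ?thesis by (simp add: X_def)
qed

lemma H_img:
  assumes j: "j \<in> {1..K}"
  shows "Hw j (Suc M) = (\<lambda>v. j # v) ` Ow j M"
proof
  show "Hw j (Suc M) \<subseteq> (\<lambda>v. j # v) ` Ow j M"
  proof
    fix u assume u: "u \<in> Hw j (Suc M)"
    then have u1: "u \<in> W (Suc M)" "u \<noteq> []" "hd u = j" by (auto simp: Hw_def)
    then have ue: "u = j # tl u" by (cases u) auto
    then have "j # tl u \<in> W (Suc M)" using u1 by simp
    then have "tl u \<in> W M" "tl u \<noteq> [] \<longrightarrow> hd (tl u) \<noteq> j" using words_Cons_iff by blast+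
    then show "u \<in> (\<lambda>v. j # v) ` Ow j M" using ue by (auto simp: Ow_def intro!: image_eqI[of _ _ "tl u"])
  qed
  show "(\<lambda>v. j # v) ` Ow j M \<subseteq> Hw j (Suc M)"
    using j by (auto simp: Ow_def Hw_def words_Cons_iff)
qed

lemma X_Suc:
  assumes j: "j \<in> {1..K}" and z: "cmod (z - c j) = R j"
  shows "X j (Suc M) z = Y j M z + kap j M"
proof -
  have Rj: "R j > 0" using Rpos j by auto
  have "X j (Suc M) z = (\<Sum>v\<in>Ow j M. ln (cmod (z - pt (j # v))))"
    unfolding X_def H_img[OF j] by (subst sum.reindex) (auto simp: inj_on_def)
  also have "\<dots> = (\<Sum>v\<in>Ow j M. ln (cmod (z - pt v)) + (ln (R j) - ln (cmod (pt v - c j))))"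
  proof (rule sum.cong[OF refl])
    fix v assume v: "v \<in> Ow j M"
    have g: "pt v \<in> G j" by (rule pt_Gj[OF j v])
    have far: "cmod (pt v - c j) > R j" using G_far[OF j g] by auto
    have ne: "pt v \<noteq> c j" using far Rj by auto
    have zp: "cmod (z - pt v) > 0" using far z by auto
    have "pt (j # v) = T j (pt v)" by (simp add: word_pt_def)
    then have "cmod (z - pt (j # v)) = R j * cmod (z - pt v) / cmod (pt v - c j)"
      using reflect[OF z ne] by simp
    then show "ln (cmod (z - pt (j # v))) = ln (cmod (z - pt v)) + (ln (R j) - ln (cmod (pt v - c j)))"
      using Rj zp far ne by (simp add: ln_mult ln_div)
  qed
  also have "\<dots> = Y j M z + kap j M" by (simp add: Y_def kap_def sum.distrib)
  finally show ?thesis .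
qed

lemma Psi_sphere:
  assumes j: "j \<in> {1..K}" and z: "cmod (z - c j) = R j"
  shows "(\<Sum>M\<le>N. (-1) ^ M * S M z) = (-1) ^ N * Y j N z + gam j N"
proof (induction N)
  case 0 then show ?case using S_split[of 0 z j] by (simp add: X_0 gam_def)
next
  case (Suc N)
  have "(\<Sum>M\<le>Suc N. (-1) ^ M * S M z) = (-1) ^ N * Y j N z + gam j N + (-1) ^ Suc N * S (Suc N) z"
    using Suc.IH by simp
  also have "S (Suc N) z = Y j N z + kap j N + Y j (Suc N) z"
    using S_split[of "Suc N" z j] X_Suc[OF j z] by simp
  finally show ?case by (simp add: gam_def algebra_simps)
qed

lemma Y_D:
  assumes "N \<ge> 1"
  shows "Dr (Ow j N) z = (real K - 1) * Y j N z - Y j (Suc N) z"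
  using Dr_eq[OF assms, of "\<lambda>w. w = [] \<or> hd w \<noteq> j" z] by (simp add: Ow_def Y_def)

definition Gam where "Gam j N = -(1 / (2 * pi)) * (((real K - 1) * gam j N + gam j (Suc N)) / real K)"
definition eps where "eps j N z = -(1 / (2 * pi)) * ((-1) ^ N * Dr (Ow j N) z / real K)"

lemma psi_sphere:
  assumes j: "j \<in> {1..K}" and z: "cmod (z - c j) = R j" and N: "N \<ge> 1"
  shows "psi_s_star K c R z0 N z = Gam j N + eps j N z"
proof -
  have "psi_s_star K c R z0 N z = -(1 / (2 * pi)) *
     (((real K - 1) * ((-1) ^ N * Y j N z + gam j N) + ((-1) ^ Suc N * Y j (Suc N) z + gam j (Suc N))) / real K)"
    unfolding psi_star_Psi Psi_sphere[OF j z] ..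
  also have "((real K - 1) * ((-1) ^ N * Y j N z + gam j N) + ((-1) ^ Suc N * Y j (Suc N) z + gam j (Suc N)))
     = ((real K - 1) * gam j N + gam j (Suc N)) + (-1) ^ N * Dr (Ow j N) z"
    unfolding Y_D[OF N] by (simp add: algebra_simps)
  also have "-(1 / (2 * pi)) * ((((real K - 1) * gam j N + gam j (Suc N)) + (-1) ^ N * Dr (Ow j N) z) / real K)
      = Gam j N + eps j N z"
    unfolding Gam_def eps_def by (simp add: add_divide_distrib ring_distribs)
  finally show ?thesis .
qed

lemma eps_bound:
  assumes "good d z" "N \<ge> 1"
  shows "norm (eps j N z) \<le> (B / (2 * pi * d)) * q ^ N"
proof -
  have Kp: "real K > 0" using K2 by auto
  have "\<bar>Dr (Ow j N) z\<bar> \<le> real K * (B / d) * q ^ N"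
    by (rule Dr_bound[OF assms(1) _ assms(2)]) (auto simp: Ow_def)
  then have "\<bar>Dr (Ow j N) z\<bar> / real K \<le> (B / d) * q ^ N"
    using Kp by (simp add: divide_le_eq mult_ac)
  then have "\<bar>Dr (Ow j N) z\<bar> / real K / (2 * pi) \<le> (B / d) * q ^ N / (2 * pi)"
    by (rule divide_right_mono) auto
  moreover have "norm (eps j N z) = \<bar>Dr (Ow j N) z\<bar> / real K / (2 * pi)"
    by (simp add: eps_def abs_mult abs_divide power_abs)
  moreover have "(B / d) * q ^ N / (2 * pi) = (B / (2 * pi * d)) * q ^ N"
    by (simp add: field_simps)
  ultimately show ?thesis by (simp add: mult.commute)
qed

end




definition Lc :: "complex \<Rightarrow> complex \<Rightarrow> complex \<Rightarrow> complex" where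
  "Lc a p z = Ln ((z - p) / (a - p))"

lemma Lc_Re:
  assumes "z \<noteq> p" "a \<noteq> p"
  shows "Re (Lc a p z) = ln (cmod (z - p)) - ln (cmod (a - p))"
  using assms by (simp add: Lc_def norm_divide ln_div)

lemma Lc_near1:
  assumes "cmod (a - p) \<ge> d" "d > 0" "z \<in> ball a (d / 2)"
  shows "cmod ((z - p) / (a - p) - 1) < 1 / 2"
proof -
  have ap: "a - p \<noteq> 0" using assms by auto
  have "(z - p) / (a - p) - 1 = (z - a) / (a - p)" using ap by (simp add: field_simps)
  then have "cmod ((z - p) / (a - p) - 1) = cmod (z - a) / cmod (a - p)" by (simp add: norm_divide)
  also have "\<dots> < (d / 2) / cmod (a - p)"
    using assms ap by (intro divide_strict_right_mono) (auto simp: dist_norm norm_minus_commute)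
  also have "\<dots> \<le> (d / 2) / d"
  proof (rule divide_left_mono)
    show "0 < cmod (a - p) * d" using assms by (intro mult_pos_pos) auto
  qed (use assms in auto)
  finally show ?thesis using assms by simp
qed

lemma Lc_holo:
  assumes "cmod (a - p) \<ge> d" "d > 0"
  shows "Lc a p holomorphic_on ball a (d / 2)"
proof -
  have ap: "a - p \<noteq> 0" using assms by auto
  have "(\<lambda>z. Ln ((z - p) / (a - p))) holomorphic_on ball a (d / 2)"
  proof (intro holomorphic_on_Ln' holomorphic_intros)
    fix z assume z: "z \<in> ball a (d / 2)"
    have n: "cmod ((z - p) / (a - p) - 1) < 1 / 2" by (rule Lc_near1[OF assms z])
    have "\<bar>Re ((z - p) / (a - p)) - 1\<bar> \<le> cmod ((z - p) / (a - p) - 1)"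
      using abs_Re_le_cmod[of "(z - p) / (a - p) - 1"] by simp
    then have "Re ((z - p) / (a - p)) > 0" using n by linarith
    then show "(z - p) / (a - p) \<notin> \<real>\<^sub>\<le>\<^sub>0" by (auto simp: complex_nonpos_Reals_iff)
  qed (use ap in auto)
  then show ?thesis by (simp add: Lc_def[abs_def])
qed

lemma Lc_diff:
  assumes "cmod (a - p) \<ge> d" "cmod (a - q) \<ge> d" "d > 0" "z \<in> ball a (d / 2)"
  shows "cmod (Lc a p z - Lc a q z) \<le> cmod (p - q) / d"
proof -
  have ap: "a - p \<noteq> 0" "a - q \<noteq> 0" using assms by auto
  have "cmod (Lc a p z - Lc a q z) \<le> 2 * cmod ((z - p) / (a - p) - (z - q) / (a - q))"
    unfolding Lc_def by (rule Ln_diff_bound[OF Lc_near1[OF assms(1,3,4)] Lc_near1[OF assms(2,3,4)]])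
  also have "(z - p) / (a - p) - (z - q) / (a - q) = (z - a) * (p - q) / ((a - p) * (a - q))"
    using ap by (simp add: field_simps)
  also have "cmod \<dots> = cmod (z - a) * cmod (p - q) / (cmod (a - p) * cmod (a - q))"
    by (simp add: norm_mult norm_divide)
  also have "2 * \<dots> \<le> 2 * ((d / 2) * cmod (p - q) / (d * d))"
  proof -
    have "cmod (z - a) \<le> d / 2" using assms(4) by (simp add: dist_norm norm_minus_commute)
    moreover have "d * d \<le> cmod (a - p) * cmod (a - q)" using assms by (intro mult_mono) auto
    ultimately have "cmod (z - a) * cmod (p - q) / (cmod (a - p) * cmod (a - q)) \<le> (d / 2) * cmod (p - q) / (d * d)"
      using assms by (intro frac_le mult_right_mono) auto
    then show ?thesis by simp
  qed
  also have "\<dots> = cmod (p - q) / d" using assms by (simp add: field_simps)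
  finally show ?thesis .
qed




lemma conv_uconv:
  assumes "convergent f"
  shows "uniformly_convergent_on A (\<lambda>N z. f N)"
proof -
  have L: "f \<longlonglongrightarrow> lim f" using assms by (simp add: convergent_LIMSEQ_iff)
  have "uniform_limit A (\<lambda>N z. f N) (\<lambda>z. lim f) sequentially"
    unfolding uniform_limit_iff
  proof (intro allI impI)
    fix e :: real assume "e > 0"
    then have "eventually (\<lambda>n. dist (f n) (lim f) < e) sequentially" using L tendsto_iff by blast
    then show "\<forall>\<^sub>F n in sequentially. \<forall>x\<in>A. dist (f n) (lim f) < e" by (rule eventually_mono) auto
  qed
  then show ?thesis unfolding uniformly_convergent_on_def by blast
qed

context cfg
begin

definition Drc :: "complex \<Rightarrow> nat list set \<Rightarrow> complex \<Rightarrow> complex" where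
  "Drc a Ws z = (\<Sum>w\<in>Ws. \<Sum>i\<in>E w. (Lc a (pt w) z - Lc a (pt (w @ [i])) z))"

definition S1c :: "complex \<Rightarrow> complex \<Rightarrow> complex" where
  "S1c a z = (\<Sum>w\<in>W 1. Lc a (pt w) z)"

definition htc :: "complex \<Rightarrow> nat \<Rightarrow> complex \<Rightarrow> complex" where
  "htc a m z = of_real (-(1 / (2 * pi))) * (of_real ((-1) ^ Suc m) * Drc a (W (Suc m)) z / of_real (real K))"

definition hhc :: "complex \<Rightarrow> nat \<Rightarrow> complex \<Rightarrow> complex" where
  "hhc a N z = of_real (1 / (2 * pi)) * (S1c a z / of_real (real K)) + (\<Sum>m<N. htc a m z) + of_real (hh N a)"

lemma snoc_W: "w \<in> W M \<Longrightarrow> M \<ge> 1 \<Longrightarrow> i \<in> E w \<Longrightarrow> w @ [i] \<in> W (Suc M)"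
  using words_snoc_iff words_ne by (auto simp: E_def)

lemma Re_Drc:
  assumes a: "good d a" and z: "z \<in> ball a (d / 2)" and Ws: "Ws \<subseteq> W M" and M: "M \<ge> 1"
  shows "Re (Drc a Ws z) = Dr Ws z - Dr Ws a"
proof -
  have dp: "d > 0" using a by (simp add: good_def)
  have nz: "z \<noteq> pt u" "a \<noteq> pt u" if "u \<in> W M'" "u \<noteq> []" for u M'
  proof -
    have "cmod (a - pt u) \<ge> d" by (rule pt_far[OF a that])
    moreover have "cmod (z - a) < d / 2" using z by (simp add: dist_norm norm_minus_commute)
    moreover have "cmod (a - pt u) \<le> cmod (a - z) + cmod (z - pt u)"
      using norm_triangle_ineq[of "a - z" "z - pt u"] by simp
    ultimately show "z \<noteq> pt u" "a \<noteq> pt u" using dp by (auto simp: norm_minus_commute)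
  qed
  have "Re (Drc a Ws z) = (\<Sum>w\<in>Ws. \<Sum>i\<in>E w. (ln (cmod (z - pt w)) - ln (cmod (z - pt (w @ [i]))))
      - (ln (cmod (a - pt w)) - ln (cmod (a - pt (w @ [i])))))"
    unfolding Drc_def Re_sum
  proof (intro sum.cong refl)
    fix w i assume w: "w \<in> Ws" and i: "i \<in> E w"
    have w1: "w \<in> W M" "w \<noteq> []" using w Ws M words_ne by auto
    have w2: "w @ [i] \<in> W (Suc M)" "w @ [i] \<noteq> []" using snoc_W w1 M i by auto
    show "Re (Lc a (pt w) z - Lc a (pt (w @ [i])) z) = ln (cmod (z - pt w)) - ln (cmod (z - pt (w @ [i]))) -
        (ln (cmod (a - pt w)) - ln (cmod (a - pt (w @ [i]))))"
      using Lc_Re[OF nz[OF w1]] Lc_Re[OF nz[OF w2]] by simp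
  qed
  also have "\<dots> = Dr Ws z - Dr Ws a" by (simp add: Dr_def sum_subtractf)
  finally show ?thesis .
qed

lemma Re_S1c:
  assumes a: "good d a" and z: "z \<in> ball a (d / 2)"
  shows "Re (S1c a z) = S 1 z - S 1 a"
proof -
  have dp: "d > 0" using a by (simp add: good_def)
  have "Re (S1c a z) = (\<Sum>w\<in>W 1. ln (cmod (z - pt w)) - ln (cmod (a - pt w)))"
    unfolding S1c_def Re_sum
  proof (intro sum.cong refl)
    fix w assume w: "w \<in> W 1"
    have ne: "w \<noteq> []" using w words_ne by auto
    have "cmod (a - pt w) \<ge> d" by (rule pt_far[OF a w ne])
    moreover have "cmod (z - a) < d / 2" using z by (simp add: dist_norm norm_minus_commute)
    moreover have "cmod (a - pt w) \<le> cmod (a - z) + cmod (z - pt w)"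
      using norm_triangle_ineq[of "a - z" "z - pt w"] by simp
    ultimately have "z \<noteq> pt w" "a \<noteq> pt w" using dp by (auto simp: norm_minus_commute)
    then show "Re (Lc a (pt w) z) = ln (cmod (z - pt w)) - ln (cmod (a - pt w))" by (rule Lc_Re)
  qed
  also have "\<dots> = S 1 z - S 1 a" by (simp add: S_def sum_subtractf)
  finally show ?thesis .
qed

lemma Re_hhc:
  assumes a: "good d a" and z: "z \<in> ball a (d / 2)"
  shows "Re (hhc a N z) = hh N z"
proof -
  have "Re (htc a m z) = hterm m z - hterm m a" for m
  proof -
    have "Re (htc a m z) = -(1 / (2 * pi)) * ((-1) ^ Suc m * Re (Drc a (W (Suc m)) z) / real K)"
      by (simp add: htc_def Re_divide_of_real)
    also have "Re (Drc a (W (Suc m)) z) = Dr (W (Suc m)) z - Dr (W (Suc m)) a"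
      using Re_Drc[OF a z order.refl, of "Suc m"] by simp
    finally show ?thesis
      by (simp add: hterm_def right_diff_distrib diff_divide_distrib)
  qed
  note R1 = this
  have R2: "Re (S1c a z / of_real (real K)) = (S 1 z - S 1 a) / real K"
    using Re_S1c[OF a z] by (simp add: Re_divide_of_real)
  have "Re (hhc a N z) = (1 / (2 * pi)) * ((S 1 z - S 1 a) / real K) + (\<Sum>m<N. hterm m z - hterm m a) + hh N a"
    unfolding hhc_def using Re_S1c[OF a z] by (simp add: Re_sum R1 R2)
  also have "\<dots> = hh N z"
    by (simp add: hh_def sum_subtractf diff_divide_distrib right_diff_distrib)
  finally show ?thesis .
qed

lemma Lc_holo_pt:
  assumes a: "good d a" and w: "w \<in> W M" "w \<noteq> []"
  shows "(\<lambda>z. Lc a (pt w) z) holomorphic_on ball a (d / 2)"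
  using Lc_holo[OF pt_far[OF a w]] a by (simp add: good_def)

lemma hhc_holo:
  assumes a: "good d a"
  shows "hhc a N holomorphic_on ball a (d / 2)"
proof -
  have D: "(\<lambda>z. Drc a (W M) z) holomorphic_on ball a (d / 2)" if "M \<ge> 1" for M
    unfolding Drc_def
  proof (intro holomorphic_on_sum holomorphic_on_diff)
    fix w i assume w: "w \<in> W M" and i: "i \<in> E w"
    have w1: "w \<noteq> []" using w that words_ne by auto
    have w2: "w @ [i] \<in> W (Suc M)" "w @ [i] \<noteq> []" using snoc_W w that i by auto
    show "(\<lambda>z. Lc a (pt w) z) holomorphic_on ball a (d / 2)" by (rule Lc_holo_pt[OF a w w1])
    show "(\<lambda>z. Lc a (pt (w @ [i])) z) holomorphic_on ball a (d / 2)" by (rule Lc_holo_pt[OF a w2])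
  qed
  have S1: "(\<lambda>z. S1c a z) holomorphic_on ball a (d / 2)"
    unfolding S1c_def
  proof (intro holomorphic_on_sum)
    fix w assume w: "w \<in> W 1"
    have "w \<noteq> []" using w words_ne by auto
    then show "(\<lambda>z. Lc a (pt w) z) holomorphic_on ball a (d / 2)" by (rule Lc_holo_pt[OF a w])
  qed
  have Kp: "real K \<noteq> 0" using K2 by auto
  have H: "(\<lambda>z. htc a m z) holomorphic_on ball a (d / 2)" for m
    unfolding htc_def
    by (intro holomorphic_on_mult holomorphic_on_divide holomorphic_on_const D) (use Kp in auto)
  have "(\<lambda>z. of_real (1 / (2 * pi)) * (S1c a z / of_real (real K)) + (\<Sum>m<N. htc a m z) + of_real (hh N a))
     holomorphic_on ball a (d / 2)"
    by (intro holomorphic_on_add holomorphic_on_mult holomorphic_on_divide holomorphic_on_const holomorphic_on_sum S1 H)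
      (use Kp in auto)
  then show ?thesis by (simp add: hhc_def[abs_def])
qed

lemma Drc_bound:
  assumes a: "good d a" and z: "z \<in> ball a (d / 2)" and M: "M \<ge> 1"
  shows "norm (Drc a (W M) z) \<le> real K * (B / d) * q ^ M"
proof -
  have dp: "d > 0" using a by (simp add: good_def)
  have "norm (Drc a (W M) z) \<le> real K * (real K - 1) ^ M * (B / d * (P\<^sup>2) ^ M)"
    unfolding Drc_def
  proof (rule sum_bound[OF order.refl M])
    show "B / d * (P\<^sup>2) ^ M \<ge> 0" using B_nonneg dp by simp
  next
    fix w i assume w: "w \<in> W M" and i: "i \<in> E w"
    have w1: "w \<noteq> []" using w M words_ne by auto
    have w2: "w @ [i] \<in> W (Suc M)" "w @ [i] \<noteq> []" using snoc_W w M i by auto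
    have i2: "i \<in> {1..K}" "i \<noteq> last w" using i by (auto simp: E_def)
    have "norm (Lc a (pt w) z - Lc a (pt (w @ [i])) z) \<le> cmod (pt w - pt (w @ [i])) / d"
      by (rule Lc_diff[OF pt_far[OF a w w1] pt_far[OF a w2] dp z])
    also have "\<dots> \<le> P ^ (2 * M) * B / d"
      using pt_snoc[OF w w1 i2] dp by (simp add: divide_right_mono)
    also have "\<dots> = B / d * (P\<^sup>2) ^ M" by (simp add: power_mult)
    finally show "norm (Lc a (pt w) z - Lc a (pt (w @ [i])) z) \<le> B / d * (P\<^sup>2) ^ M" .
  qed
  also have "\<dots> = real K * (B / d) * q ^ M" by (simp add: q_def power_mult_distrib)
  finally show ?thesis .
qed

lemma htc_bound:
  assumes a: "good d a" and z: "z \<in> ball a (d / 2)"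
  shows "norm (htc a m z) \<le> (B * q / (2 * pi * d)) * q ^ m"
proof -
  have Kp: "real K > 0" using K2 by auto
  have "norm (Drc a (W (Suc m)) z) \<le> real K * (B / d) * q ^ Suc m"
    by (rule Drc_bound[OF a z]) auto
  then have "norm (Drc a (W (Suc m)) z) / real K \<le> (B / d) * q ^ Suc m"
    using Kp by (simp add: divide_le_eq mult_ac)
  then have "norm (Drc a (W (Suc m)) z) / real K / (2 * pi) \<le> (B / d) * q ^ Suc m / (2 * pi)"
    by (rule divide_right_mono) auto
  moreover have "norm (htc a m z) = norm (Drc a (W (Suc m)) z) / real K / (2 * pi)"
    by (simp add: htc_def norm_mult norm_divide norm_power)
  moreover have "(B / d) * q ^ Suc m / (2 * pi) = (B * q / (2 * pi * d)) * q ^ m"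
    by (simp add: field_simps)
  ultimately show ?thesis by simp
qed

lemma local_lim:
  assumes a: "good d a"
  shows "\<exists>g. g holomorphic_on ball a (d / 4) \<and> (\<forall>z\<in>ball a (d / 4). (\<lambda>N. hh N z) \<longlonglongrightarrow> Re (g z))"
proof -
  have dp: "d > 0" using a by (simp add: good_def)
  have sub: "cball a (d / 4) \<subseteq> ball a (d / 2)"
    using dp by (subst cball_subset_ball_iff) simp
  have u0: "uniformly_convergent_on (ball a (d / 2)) (\<lambda>N z. \<Sum>m<N. htc a m z)"
    using geom_uconv[where A = "ball a (d / 2)" and f = "htc a", OF htc_bound[OF a] q] by blast
  have u1: "uniformly_convergent_on (cball a (d / 4)) (\<lambda>N z. \<Sum>m<N. htc a m z)"
    by (rule uniformly_convergent_on_subset[OF u0 sub])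
  have "uniformly_convergent_on {a} hh"
    by (rule hh_uconv[of "{a}" d]) (use a in simp)
  then have "convergent (\<lambda>N. hh N a)"
    by (simp add: uniformly_convergent_on_singleton)
  then obtain L where "(\<lambda>N. hh N a) \<longlonglongrightarrow> L" by (auto simp: convergent_def)
  then have "(\<lambda>N. of_real (hh N a) :: complex) \<longlonglongrightarrow> of_real L" by (rule tendsto_of_real)
  then have "convergent (\<lambda>N. of_real (hh N a) :: complex)" by (rule convergentI)
  then have u2: "uniformly_convergent_on (cball a (d / 4)) (\<lambda>N z. of_real (hh N a) :: complex)"
    by (rule conv_uconv)
  have "uniformly_convergent_on (cball a (d / 4))
     (\<lambda>N z. of_real (1 / (2 * pi)) * (S1c a z / of_real (real K)) + (\<Sum>m<N. htc a m z) + of_real (hh N a))"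
    using uniformly_convergent_add[OF uniformly_convergent_add[OF
        uniformly_convergent_on_const[of "cball a (d / 4)" "\<lambda>z. of_real (1 / (2 * pi)) * (S1c a z / of_real (real K))"] u1] u2]
    by simp
  then have "uniformly_convergent_on (cball a (d / 4)) (hhc a)"
    by (simp add: hhc_def[abs_def])
  then obtain g where g: "uniform_limit (cball a (d / 4)) (hhc a) g sequentially"
    by (auto simp: uniformly_convergent_on_def)
  have hol: "g holomorphic_on ball a (d / 4)"
  proof (rule holomorphic_uniform_limit[OF _ g])
    show "\<forall>\<^sub>F n in sequentially. continuous_on (cball a (d / 4)) (hhc a n) \<and> hhc a n holomorphic_on ball a (d / 4)"
    proof (intro always_eventually allI conjI)
      fix n
      show "continuous_on (cball a (d / 4)) (hhc a n)"
        using holomorphic_on_imp_continuous_on[OF hhc_holo[OF a]] sub continuous_on_subset by blast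
      show "hhc a n holomorphic_on ball a (d / 4)"
        using hhc_holo[OF a] ball_subset_cball sub by (meson holomorphic_on_subset subset_trans)
    qed
  qed (rule trivial_limit_sequentially)
  have "(\<lambda>N. hh N z) \<longlonglongrightarrow> Re (g z)" if z: "z \<in> ball a (d / 4)" for z
  proof -
    have "(\<lambda>N. hhc a N z) \<longlonglongrightarrow> g z"
      using tendsto_uniform_limitI[OF g] z by auto
    then have "(\<lambda>N. Re (hhc a N z)) \<longlonglongrightarrow> Re (g z)" by (rule tendsto_Re)
    moreover have "Re (hhc a N z) = hh N z" for N
      by (rule Re_hhc[OF a]) (use z sub ball_subset_cball in blast)
    ultimately show ?thesis by simp
  qed
  then show ?thesis using hol by blast
qed

end




context cfg
begin

abbreviation "Dm \<equiv> Dfin K c R"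
abbreviation "psis N z \<equiv> psi_s_star K c R z0 N z"

lemma psi_hh: "psis N z = hh N z - ln (cmod (z - z0)) / (2 * pi)"
  using psi_star_hh[of N z] by simp

lemma hh_conv_good: "good d z \<Longrightarrow> convergent (\<lambda>N. hh N z)"
proof -
  assume "good d z"
  then have "uniformly_convergent_on {z} hh" by (intro hh_uconv[of "{z}" d]) auto
  then show ?thesis by (simp add: uniformly_convergent_on_singleton)
qed

lemma psi_lim_eq:
  assumes "(\<lambda>N. hh N z) \<longlonglongrightarrow> L"
  shows "(\<lambda>N. psis N z) \<longlonglongrightarrow> L - ln (cmod (z - z0)) / (2 * pi)"
    and "lim (\<lambda>N. psis N z) = L - ln (cmod (z - z0)) / (2 * pi)"
proof -
  show t: "(\<lambda>N. psis N z) \<longlonglongrightarrow> L - ln (cmod (z - z0)) / (2 * pi)"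
    unfolding psi_hh by (intro tendsto_diff assms tendsto_const)
  then show "lim (\<lambda>N. psis N z) = L - ln (cmod (z - z0)) / (2 * pi)" by (rule limI)
qed

lemma harm_hh: "harmonic_on Dm (hh N)"
proof (rule locRe_harmonic[OF _ open_Dfin])
  show "locRe Dm (hh N)" unfolding locRe_def
  proof
    fix a assume "a \<in> Dm"
    then obtain d where a: "good d a" using Dfin_good by blast
    then have "d / 2 > 0" by (simp add: good_def)
    moreover have "\<forall>x\<in>ball a (d / 2). hh N x = Re (hhc a N x)" using Re_hhc[OF a] by simp
    ultimately show "\<exists>r>0. \<exists>g. g holomorphic_on ball a r \<and> (\<forall>x\<in>ball a r. hh N x = Re (g x))"
      using hhc_holo[OF a] by blast
  qed
qed

lemma loc_hlim:
  assumes a: "good d a"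
  shows "\<exists>r>0. \<exists>g. g holomorphic_on ball a r \<and> (\<forall>x\<in>ball a r. lim (\<lambda>N. hh N x) = Re (g x))"
proof -
  obtain g where g: "g holomorphic_on ball a (d / 4)" "\<forall>z\<in>ball a (d / 4). (\<lambda>N. hh N z) \<longlonglongrightarrow> Re (g z)"
    using local_lim[OF a] by blast
  have "d / 4 > 0" using a by (simp add: good_def)
  moreover have "\<forall>x\<in>ball a (d / 4). lim (\<lambda>N. hh N x) = Re (g x)" using g(2) limI by blast
  ultimately show ?thesis using g(1) by blast
qed

lemma harm_psi_lim: "harmonic_on (Dm - {z0}) (\<lambda>z. lim (\<lambda>N. psis N z))"
proof (rule locRe_harmonic)
  show "open (Dm - {z0})" using open_Dfin by (rule open_delete)
  show "locRe (Dm - {z0}) (\<lambda>z. lim (\<lambda>N. psis N z))" unfolding locRe_def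
  proof
    fix a assume aD: "a \<in> Dm - {z0}"
    then obtain d where a: "good d a" using Dfin_good by blast
    have dp: "d > 0" using a by (simp add: good_def)
    obtain g where g: "g holomorphic_on ball a (d / 4)" "\<forall>z\<in>ball a (d / 4). (\<lambda>N. hh N z) \<longlonglongrightarrow> Re (g z)"
      using local_lim[OF a] by blast
    define e where "e = cmod (a - z0)"
    have e: "e > 0" using aD by (simp add: e_def)
    define r where "r = min (d / 4) (e / 2)"
    have r: "r > 0" using dp e by (simp add: r_def)
    define g' where "g' = (\<lambda>z. g z - Lc a z0 z / of_real (2 * pi) - of_real (ln e / (2 * pi)))"
    have "g' holomorphic_on ball a r"
    proof -
      have "g holomorphic_on ball a r" using g(1) by (rule holomorphic_on_subset) (auto simp: r_def)
      moreover have "Lc a z0 holomorphic_on ball a r"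
        using Lc_holo[of e a z0] e by (rule_tac holomorphic_on_subset) (auto simp: r_def e_def)
      ultimately show ?thesis unfolding g'_def by (intro holomorphic_intros) auto
    qed
    moreover have "\<forall>x\<in>ball a r. lim (\<lambda>N. psis N x) = Re (g' x)"
    proof
      fix x assume x: "x \<in> ball a r"
      have "(\<lambda>N. hh N x) \<longlonglongrightarrow> Re (g x)" using g(2) x by (auto simp: r_def)
      then have l: "lim (\<lambda>N. psis N x) = Re (g x) - ln (cmod (x - z0)) / (2 * pi)" by (rule psi_lim_eq)
      have xz: "x \<noteq> z0"
      proof
        assume "x = z0"
        then have "dist a z0 < e / 2" using x by (auto simp: r_def)
        then show False using e by (simp add: e_def dist_norm)
      qed
      have az: "a \<noteq> z0" using aD by auto
      have "Re (g' x) = Re (g x) - (ln (cmod (x - z0)) - ln e) / (2 * pi) - ln e / (2 * pi)"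
        unfolding g'_def using Lc_Re[OF xz az] by (simp add: Re_divide_of_real e_def)
      then show "lim (\<lambda>N. psis N x) = Re (g' x)" using l by (simp add: diff_divide_distrib)
    qed
    ultimately show "\<exists>r>0. \<exists>g. g holomorphic_on ball a r \<and> (\<forall>x\<in>ball a r. lim (\<lambda>N. psis N x) = Re (g x))"
      using r by blast
  qed
qed

lemma part_ball:
  "\<exists>e>0. \<exists>g. harmonic_on (ball z0 e) g \<and>
          (\<forall>z\<in>ball z0 e - {z0}. g z = lim (\<lambda>N. psis N z) + ln (cmod (z - z0)) / (2 * pi))"
proof -
  obtain e where e: "e > 0" "ball z0 e \<subseteq> Dm" using open_Dfin z0D openE by blast
  have "harmonic_on (ball z0 e) (\<lambda>z. lim (\<lambda>N. hh N z))"
  proof (rule locRe_harmonic[OF _ open_ball])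
    show "locRe (ball z0 e) (\<lambda>z. lim (\<lambda>N. hh N z))" unfolding locRe_def
    proof
      fix a assume "a \<in> ball z0 e"
      then have "a \<in> Dm" using e by blast
      then obtain d where a: "good d a" using Dfin_good by blast
      show "\<exists>r>0. \<exists>g. g holomorphic_on ball a r \<and> (\<forall>x\<in>ball a r. lim (\<lambda>N. hh N x) = Re (g x))"
        by (rule loc_hlim[OF a])
    qed
  qed
  moreover have "\<forall>z\<in>ball z0 e - {z0}. lim (\<lambda>N. hh N z) = lim (\<lambda>N. psis N z) + ln (cmod (z - z0)) / (2 * pi)"
  proof
    fix z assume "z \<in> ball z0 e - {z0}"
    then have "z \<in> Dm" using e by blast
    then obtain d where "good d z" using Dfin_good by blast
    then have "(\<lambda>N. hh N z) \<longlonglongrightarrow> lim (\<lambda>N. hh N z)" using hh_conv_good convergent_LIMSEQ_iff by blast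
    then show "lim (\<lambda>N. hh N z) = lim (\<lambda>N. psis N z) + ln (cmod (z - z0)) / (2 * pi)"
      using psi_lim_eq(2) by simp
  qed
  ultimately show ?thesis using e(1) by blast
qed

lemma part_compact:
  assumes "compact A" "A \<subseteq> Dm"
  shows "uniformly_convergent_on A hh"
proof -
  obtain d where "\<forall>z\<in>A. good d z"
    using good_compact[OF assms(1)] Dfin_pos assms(2) by blast
  then show ?thesis using hh_uconv by blast
qed

lemma part_conv:
  assumes "z \<in> Dm - {z0}"
  shows "convergent (\<lambda>N. psis N z)"
proof -
  obtain d where "good d z" using Dfin_good assms by blast
  then obtain L where "(\<lambda>N. hh N z) \<longlonglongrightarrow> L" using hh_conv_good convergent_def by blast
  then show ?thesis using psi_lim_eq(1) convergentI by blast
qed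

lemma part_sphere:
  assumes j: "j \<in> {1..K}"
  shows "\<exists>C::real. uniform_limit (sphere (c j) (R j)) (\<lambda>N z. psis N z) (\<lambda>z. C) sequentially"
proof -
  let ?A = "sphere (c j) (R j)"
  obtain d where gd: "\<forall>z\<in>?A. good d z"
    using good_compact[of ?A] sphere_pos[OF j] by auto
  define z1 where "z1 = c j + of_real (R j)"
  have Rj: "R j > 0" using Rpos j by auto
  have z1: "z1 \<in> ?A" using Rj by (simp add: z1_def dist_norm)
  obtain L where L: "(\<lambda>N. hh N z1) \<longlonglongrightarrow> L" using hh_conv_good gd z1 convergent_def by blast
  define C where "C = L - ln (cmod (z1 - z0)) / (2 * pi)"
  have pC: "(\<lambda>N. psis N z1) \<longlonglongrightarrow> C" using psi_lim_eq(1)[OF L] by (simp add: C_def)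
  have onA: "cmod (z - c j) = R j" if "z \<in> ?A" for z using that by (simp add: dist_norm norm_minus_commute)
  have ulE: "uniform_limit ?A (eps j) (\<lambda>z. 0) sequentially"
    by (rule geom_ulim0[OF eps_bound q]) (use gd in auto)
  have "(\<lambda>N. eps j N z1) \<longlonglongrightarrow> 0" using tendsto_uniform_limitI[OF ulE z1] .
  then have "(\<lambda>N. psis N z1 - eps j N z1) \<longlonglongrightarrow> C - 0" by (intro tendsto_diff pC)
  moreover have "eventually (\<lambda>N. psis N z1 - eps j N z1 = Gam j N) sequentially"
    using eventually_ge_at_top[of 1]
    by (rule eventually_mono) (use psi_sphere[OF j onA[OF z1]] in auto)
  ultimately have G: "(\<lambda>N. Gam j N) \<longlonglongrightarrow> C" using Lim_transform_eventually by force
  have ulG: "uniform_limit ?A (\<lambda>N z. Gam j N) (\<lambda>z. C) sequentially"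
    unfolding uniform_limit_iff
  proof (intro allI impI)
    fix e :: real assume "e > 0"
    then have "eventually (\<lambda>n. dist (Gam j n) C < e) sequentially" using G tendsto_iff by blast
    then show "\<forall>\<^sub>F n in sequentially. \<forall>x\<in>?A. dist (Gam j n) C < e" by (rule eventually_mono) auto
  qed
  have "uniform_limit ?A (\<lambda>N z. Gam j N + eps j N z) (\<lambda>z. C + 0) sequentially"
    by (rule uniform_limit_add[OF ulG ulE])
  then have ul: "uniform_limit ?A (\<lambda>N z. Gam j N + eps j N z) (\<lambda>z. C) sequentially" by simp
  have "uniform_limit ?A (\<lambda>N z. psis N z) (\<lambda>z. C) sequentially"
  proof (subst uniform_limit_cong[where g = "\<lambda>N z. Gam j N + eps j N z" and i = "\<lambda>z. C"])
    show "\<forall>\<^sub>F N in sequentially. \<forall>z\<in>?A. psis N z = Gam j N + eps j N z"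
      using eventually_ge_at_top[of 1]
      by (rule eventually_mono) (use psi_sphere[OF j onA] in auto)
  qed (use ul in auto)
  then show ?thesis by blast
qed

end

theorem mainTheorem1:
  fixes K :: nat and c :: "nat \<Rightarrow> complex" and R :: "nat \<Rightarrow> real" and z0 :: complex
  assumes K2: "K \<ge> 2"
    and Rpos: "\<forall>j\<in>{1..K}. R j > 0"
    and disj: "\<forall>i\<in>{1..K}. \<forall>j\<in>{1..K}. i \<noteq> j \<longrightarrow> cball (c i) (R i) \<inter> cball (c j) (R j) = {}"
    and z0D: "z0 \<in> Dfin K c R"
    and small: "(real K - 1) * (Pmax K c R z0)\<^sup>2 < 1"
  shows
    "(\<exists>h :: nat \<Rightarrow> complex \<Rightarrow> real.
        (\<forall>N. harmonic_on (Dfin K c R) (h N)) \<and>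
        (\<forall>N. \<forall>z\<in>Dfin K c R - {z0}.
              h N z = psi_s_star K c R z0 N z + ln (cmod (z - z0)) / (2 * pi)) \<and>
        (\<forall>S. compact S \<and> S \<subseteq> Dfin K c R \<longrightarrow> uniformly_convergent_on S h))
     \<and> (\<forall>z\<in>Dfin K c R - {z0}. convergent (\<lambda>N. psi_s_star K c R z0 N z))
     \<and> harmonic_on (Dfin K c R - {z0}) (\<lambda>z. lim (\<lambda>N. psi_s_star K c R z0 N z))
     \<and> (\<exists>e>0. \<exists>g. harmonic_on (ball z0 e) g \<and>
          (\<forall>z\<in>ball z0 e - {z0}.
             g z = lim (\<lambda>N. psi_s_star K c R z0 N z) + ln (cmod (z - z0)) / (2 * pi)))
     \<and> (\<forall>j\<in>{1..K}. \<exists>C::real.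
          uniform_limit (sphere (c j) (R j)) (\<lambda>N z. psi_s_star K c R z0 N z) (\<lambda>z. C) sequentially)"
proof -
  interpret cfg K c R z0 using assms by unfold_locales
  have h: "(\<forall>N. harmonic_on (Dfin K c R) (hh N)) \<and>
        (\<forall>N. \<forall>z\<in>Dfin K c R - {z0}.
              hh N z = psi_s_star K c R z0 N z + ln (cmod (z - z0)) / (2 * pi)) \<and>
        (\<forall>S. compact S \<and> S \<subseteq> Dfin K c R \<longrightarrow> uniformly_convergent_on S hh)"
    using harm_hh psi_star_hh part_compact by metis
  show ?thesis
    using h part_conv harm_psi_lim part_ball part_sphere by blast
qed


end
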